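(* For every $0\le r\le\min\{m,n\}$, \[SF_r=\sum_{d=0}^{r}\{SF_d-SF_{d-1}\}_{\lambda_1\le n+m-d-r},\] with the convention $SF_{-1}=0$.
   Context: Fix positive integers $n,m$. $\Lambda$ is the ring of symmetric functions with Schur functions $s_\lambda$ and complete homogeneous functions $h_k$. For $0\le d\le\min\{m,n\}$, $SF_d:=\sum_{\mu\vdash d}(s_\mu h_{n-d})\otimes(s_\mu h_{m-d})\in\Lambda\otimes\Lambda$. For $F=\sum_{\lambda,\mu}c_{\lambda,\mu}s_\lambda\otimes s_\mu$ and an integer $L$, the truncation $\{F\}_{\lambda_1\le L}:=\sum_{\lambda_1\le L,\ \mu_1\le L}c_{\lambda,\mu}s_\lambda\otimes s_\mu$ (both partitions must satisfy the bound). *)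

theory Defs
  imports Main "HOL-Library.Poly_Mapping" "HOL-Library.Function_Algebras"
begin

text \<open>Symmetric functions in countably many variables x_0, x_1, ... are represented
  by their coefficient functions on monomials (exponent vectors with finite support).
  Lambda tensor Lambda is represented faithfully inside series in two independent
  variable sets x and y: a coefficient function on pairs of monomials.\<close>

type_synonym mono = "nat \<Rightarrow>\<^sub>0 nat"
type_synonym sfun = "mono \<Rightarrow> int"
type_synonym sfun2 = "mono \<times> mono \<Rightarrow> int"

definition sf_mult :: "sfun \<Rightarrow> sfun \<Rightarrow> sfun" where
  "sf_mult f g = (\<lambda>\<gamma>. \<Sum>p\<in>{p. fst p + snd p = \<gamma>}. f (fst p) * g (snd p))"

definition sf_tensor :: "sfun \<Rightarrow> sfun \<Rightarrow> sfun2" where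
  "sf_tensor f g = (\<lambda>(a, b). f a * g b)"

definition is_partition :: "nat list \<Rightarrow> bool" where
  "is_partition la \<longleftrightarrow> sorted_wrt (\<ge>) la \<and> 0 \<notin> set la"

definition partitions_of :: "nat \<Rightarrow> nat list set" where
  "partitions_of d = {la. is_partition la \<and> sum_list la = d}"

definition first_part :: "nat list \<Rightarrow> nat" where
  "first_part la = (case la of [] \<Rightarrow> 0 | x # _ \<Rightarrow> x)"

definition cells :: "nat list \<Rightarrow> (nat \<times> nat) set" where
  "cells la = {(i, j). i < length la \<and> j < la ! i}"

definition is_ssyt :: "nat list \<Rightarrow> (nat \<times> nat \<Rightarrow> nat) \<Rightarrow> bool" where
  "is_ssyt la T \<longleftrightarrow>
     (\<forall>i j. (i, j) \<in> cells la \<and> (i, Suc j) \<in> cells la \<longrightarrow> T (i, j) \<le> T (i, Suc j)) \<and>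
     (\<forall>i j. (i, j) \<in> cells la \<and> (Suc i, j) \<in> cells la \<longrightarrow> T (i, j) < T (Suc i, j)) \<and>
     (\<forall>c. c \<notin> cells la \<longrightarrow> T c = 0)"

definition schur :: "nat list \<Rightarrow> sfun" where
  "schur la = (\<lambda>\<alpha>. int (card {T. is_ssyt la T \<and>
       (\<forall>k. card {c \<in> cells la. T c = k} = Poly_Mapping.lookup \<alpha> k)}))"

definition hcomp :: "nat \<Rightarrow> sfun" where
  "hcomp k = (\<lambda>\<alpha>. if sum (Poly_Mapping.lookup \<alpha>) (Poly_Mapping.keys \<alpha>) = k then 1 else 0)"

definition SF :: "nat \<Rightarrow> nat \<Rightarrow> nat \<Rightarrow> sfun2" where
  "SF n m d = (\<Sum>mu\<in>partitions_of d.
      sf_tensor (sf_mult (schur mu) (hcomp (n - d))) (sf_mult (schur mu) (hcomp (m - d))))"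

definition schur_expand :: "(nat list \<times> nat list \<Rightarrow> int) \<Rightarrow> sfun2" where
  "schur_expand c = (\<Sum>p\<in>{p. c p \<noteq> 0}.
      (\<lambda>x. c p * sf_tensor (schur (fst p)) (schur (snd p)) x))"

definition schur_coeffs :: "sfun2 \<Rightarrow> (nat list \<times> nat list \<Rightarrow> int)" where
  "schur_coeffs F = (THE c. finite {p. c p \<noteq> 0} \<and>
      (\<forall>p. c p \<noteq> 0 \<longrightarrow> is_partition (fst p) \<and> is_partition (snd p)) \<and>
      F = schur_expand c)"

definition trunc :: "nat \<Rightarrow> sfun2 \<Rightarrow> sfun2" where
  "trunc L F = schur_expand (\<lambda>p. if first_part (fst p) \<le> L \<and> first_part (snd p) \<le> L
                                  then schur_coeffs F p else 0)"

end

theory Submission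
  imports Defs "HOL-Library.Poly_Mapping" "HOL-Library.Function_Algebras"
begin


definition pt :: "nat list \<Rightarrow> nat \<Rightarrow> nat" where
  "pt la i = (if i < length la then la ! i else 0)"

definition lst :: "(nat \<Rightarrow> nat) \<Rightarrow> nat list" where
  "lst f = map f [0..<(LEAST i. f i = 0)]"

definition hs :: "nat list \<Rightarrow> nat list \<Rightarrow> bool" where
  "hs la mu \<longleftrightarrow> (\<forall>i. pt mu i \<le> pt la i \<and> pt la (Suc i) \<le> pt mu i)"

lemma sum_fun_apply: "(sum f A) x = sum (\<lambda>a. f a x) A"
  by (induction A rule: infinite_finite_induct) auto

lemma pt_ge: "length la \<le> i \<Longrightarrow> pt la i = 0"
  by (simp add: pt_def)

lemma is_partition_pt_pos: "is_partition la \<Longrightarrow> i < length la \<Longrightarrow> 0 < pt la i"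
  unfolding is_partition_def pt_def by (metis gr0I nth_mem)

lemma is_partition_pt_pos_iff: "is_partition la \<Longrightarrow> 0 < pt la i \<longleftrightarrow> i < length la"
  using is_partition_pt_pos pt_ge by (metis linorder_not_le less_irrefl)

lemma is_partition_mono: "is_partition la \<Longrightarrow> i \<le> j \<Longrightarrow> pt la j \<le> pt la i"
  unfolding is_partition_def pt_def
  by (auto simp: sorted_wrt_iff_nth_less dest: le_neq_implies_less)

lemma is_partition_Suc: "is_partition la \<Longrightarrow> pt la (Suc i) \<le> pt la i"
  by (simp add: is_partition_mono)

lemma partition_eqI:
  assumes "is_partition a" "is_partition b" "\<And>i. pt a i = pt b i"
  shows "a = b"
proof -
  have "length a = length b"
  proof (rule ccontr)
    assume "length a \<noteq> length b"
    then consider "length a < length b" | "length b < length a" by linarith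
    then show False
    proof cases
      case 1 then show False using is_partition_pt_pos_iff[OF assms(1), of "length a"]
        is_partition_pt_pos_iff[OF assms(2), of "length a"] assms(3) by auto
    next
      case 2 then show False using is_partition_pt_pos_iff[OF assms(1), of "length b"]
        is_partition_pt_pos_iff[OF assms(2), of "length b"] assms(3) by auto
    qed
  qed
  then show ?thesis using assms(3) unfolding pt_def by (metis nth_equalityI)
qed

lemma lst_props:
  assumes dec: "\<And>i. f (Suc i) \<le> f i" and z: "f L = 0"
  shows "is_partition (lst f)" "\<And>i. pt (lst f) i = f i"
proof -
  define K where "K = (LEAST i. f i = 0)"
  have fK: "f K = 0" unfolding K_def by (rule LeastI[of _ L]) (rule z)
  have lt: "i < K \<Longrightarrow> f i \<noteq> 0" for i unfolding K_def using not_less_Least by blast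
  have am: "i \<le> j \<Longrightarrow> f j \<le> f i" for i j
    using dec by (simp add: antimono_iff_le_Suc antimonoD)
  have ge: "K \<le> i \<Longrightarrow> f i = 0" for i using am[of K i] fK by simp
  show "pt (lst f) i = f i" for i
    unfolding pt_def lst_def K_def[symmetric] using ge by auto
  show "is_partition (lst f)"
    unfolding is_partition_def lst_def K_def[symmetric]
    using lt am by (auto simp: sorted_wrt_iff_nth_less) (metis neq0_conv)
qed

lemma sum_list_pt:
  assumes "length la \<le> L"
  shows "sum_list la = (\<Sum>i<L. pt la i)"
proof -
  have "sum_list la = (\<Sum>i<length la. la ! i)"
    by (simp add: sum_list_sum_nth atLeast0LessThan)
  also have "\<dots> = (\<Sum>i<length la. pt la i)" by (simp add: pt_def)
  also have "\<dots> = (\<Sum>i<L. pt la i)"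
    by (rule sum.mono_neutral_left) (use assms in \<open>auto simp: pt_def\<close>)
  finally show ?thesis .
qed

lemma partition_length_le: "is_partition la \<Longrightarrow> length la \<le> sum_list la"
proof (induction la)
  case (Cons a la)
  then have "is_partition la" "0 < a" unfolding is_partition_def by auto
  with Cons show ?case by simp
qed simp

lemma finite_partitions_of: "finite (partitions_of d)"
proof -
  have "partitions_of d \<subseteq> {xs. set xs \<subseteq> {..d} \<and> length xs \<le> d}"
    unfolding partitions_of_def using partition_length_le
    by (auto simp: member_le_sum_list)
  then show ?thesis using finite_lists_length_le[of "{..d}" d] finite_subset by blast
qed

lemma first_part_pt: "first_part la = pt la 0"
  by (cases la) (auto simp: first_part_def pt_def)

lemma cells_pt: "cells la = {(i, j). j < pt la i}"
  unfolding cells_def pt_def by (auto split: if_splits)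


definition bA :: "nat list \<Rightarrow> nat list \<Rightarrow> nat \<Rightarrow> nat" where
  "bA p q i = max (pt p (Suc i)) (pt q (Suc i))"
definition bB :: "nat list \<Rightarrow> nat list \<Rightarrow> nat \<Rightarrow> nat" where
  "bB p q i = min (pt p i) (pt q i)"
definition box :: "(nat \<Rightarrow> nat) \<Rightarrow> (nat \<Rightarrow> nat) \<Rightarrow> (nat \<Rightarrow> nat) set" where
  "box A B = {f. \<forall>i. A i \<le> f i \<and> f i \<le> B i}"

lemma box_char: "hs p mu \<and> hs q mu \<longleftrightarrow> pt mu \<in> box (bA p q) (bB p q)"
  unfolding hs_def box_def bA_def bB_def by auto

lemma box_part:
  assumes "is_partition p" "is_partition q" "f \<in> box (bA p q) (bB p q)"
  shows "is_partition (lst f)" "pt (lst f) = f"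
proof -
  have dec: "f (Suc i) \<le> f i" for i
  proof -
    have "f (Suc i) \<le> bB p q (Suc i)" using assms(3) by (simp add: box_def)
    also have "\<dots> \<le> bA p q i" by (simp add: bA_def bB_def)
    also have "\<dots> \<le> f i" using assms(3) by (simp add: box_def)
    finally show ?thesis .
  qed
  have z: "f (length p) = 0"
  proof -
    have "f (length p) \<le> bB p q (length p)" using assms(3) by (simp add: box_def)
    also have "\<dots> \<le> pt p (length p)" by (simp add: bB_def)
    finally show ?thesis by (simp add: pt_ge)
  qed
  show "is_partition (lst f)" "pt (lst f) = f" using lst_props[OF dec z] by auto
qed

lemma box_finite:
  assumes "\<And>i. L \<le> i \<Longrightarrow> B i = 0"
  shows "finite (box A B)"
proof -
  have "box A B \<subseteq> {f. \<forall>x. (x \<in> {..<L} \<longrightarrow> f x \<in> {..Max (B ` {..<L})}) \<and> (x \<notin> {..<L} \<longrightarrow> f x = 0)}"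
  proof (intro subsetI CollectI allI conjI impI)
    fix f x assume f: "f \<in> box A B"
    then have fx: "f x \<le> B x" by (simp add: box_def)
    show "x \<in> {..<L} \<Longrightarrow> f x \<in> {..Max (B ` {..<L})}"
    proof -
      assume "x \<in> {..<L}"
      then have "B x \<le> Max (B ` {..<L})" by (intro Max_ge) auto
      then show ?thesis using fx by simp
    qed
    show "x \<notin> {..<L} \<Longrightarrow> f x = 0" using fx assms[of x] by auto
  qed
  then show ?thesis using finite_set_of_finite_funs[of "{..<L}" "{..Max (B ` {..<L})}" 0]
    finite_subset by blast
qed

lemma hs_length:
  assumes "is_partition p" "is_partition mu" "hs p mu"
  shows "length mu \<le> length p"
proof (rule ccontr)
  assume "\<not> ?thesis"
  then have "0 < pt mu (length p)" using is_partition_pt_pos_iff[OF assms(2)] by simp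
  moreover have "pt mu (length p) \<le> pt p (length p)" using assms(3) hs_def by simp
  ultimately show False by (simp add: pt_ge)
qed

definition cnt :: "nat list \<Rightarrow> nat list \<Rightarrow> nat \<Rightarrow> nat" where
  "cnt p q d = card {mu \<in> partitions_of d. hs p mu \<and> hs q mu}"

lemma cnt_box:
  assumes "is_partition p" "is_partition q" "length p \<le> L"
  shows "cnt p q d = card {f \<in> box (bA p q) (bB p q). (\<Sum>i<L. f i) = d}"
proof -
  have "bij_betw pt {mu \<in> partitions_of d. hs p mu \<and> hs q mu} {f \<in> box (bA p q) (bB p q). (\<Sum>i<L. f i) = d}"
  proof (rule bij_betw_imageI)
    show "inj_on pt {mu \<in> partitions_of d. hs p mu \<and> hs q mu}"
      by (auto simp: inj_on_def partitions_of_def intro: partition_eqI)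
    show "pt ` {mu \<in> partitions_of d. hs p mu \<and> hs q mu} = {f \<in> box (bA p q) (bB p q). (\<Sum>i<L. f i) = d}"
    proof (rule antisym; rule subsetI)
      fix g assume "g \<in> pt ` {mu \<in> partitions_of d. hs p mu \<and> hs q mu}"
      then obtain mu where mu: "mu \<in> partitions_of d" "hs p mu" "hs q mu" and g: "g = pt mu" by auto
      have "length mu \<le> L" using hs_length[OF assms(1) _ mu(2)] mu(1) assms(3)
        by (auto simp: partitions_of_def)
      then have "(\<Sum>i<L. pt mu i) = d" using mu(1) sum_list_pt by (auto simp: partitions_of_def)
      then show "g \<in> {f \<in> box (bA p q) (bB p q). (\<Sum>i<L. f i) = d}"
        using mu box_char g by blast
    next
      fix f assume "f \<in> {f \<in> box (bA p q) (bB p q). (\<Sum>i<L. f i) = d}"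
      then have f: "f \<in> box (bA p q) (bB p q)" "(\<Sum>i<L. f i) = d" by auto
      have l: "is_partition (lst f)" "pt (lst f) = f" using box_part[OF assms(1,2) f(1)] by auto
      have hh: "hs p (lst f) \<and> hs q (lst f)" using box_char l f by simp
      then have "length (lst f) \<le> L" using hs_length[OF assms(1) l(1)] assms(3) by auto
      then have "sum_list (lst f) = d" using sum_list_pt l f by simp
      then show "f \<in> pt ` {mu \<in> partitions_of d. hs p mu \<and> hs q mu}"
        using l hh by (auto simp: partitions_of_def intro!: image_eqI[of _ _ "lst f"])
    qed
  qed
  then show ?thesis unfolding cnt_def by (rule bij_betw_same_card)
qed

lemma sum_max_min:
  assumes "is_partition p" "is_partition q" "length p \<le> L" "length q \<le> L"
  shows "(\<Sum>i<L. bA p q i + bB p q i) + max (pt p 0) (pt q 0) = sum_list p + sum_list q"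
proof -
  have "(\<Sum>i<L. bA p q i) + max (pt p 0) (pt q 0) = (\<Sum>i<Suc L. max (pt p i) (pt q i))"
    unfolding bA_def using sum.lessThan_Suc_shift[of "\<lambda>i. max (pt p i) (pt q i)" L] by simp
  also have "\<dots> = (\<Sum>i<L. max (pt p i) (pt q i))"
    using assms by (simp add: pt_ge)
  finally have 1: "(\<Sum>i<L. bA p q i) + max (pt p 0) (pt q 0) = (\<Sum>i<L. max (pt p i) (pt q i))" .
  have "(\<Sum>i<L. max (pt p i) (pt q i)) + (\<Sum>i<L. bB p q i) = (\<Sum>i<L. pt p i + pt q i)"
    unfolding bB_def sum.distrib[symmetric] by (rule sum.cong) auto
  then show ?thesis using 1 sum_list_pt[OF assms(3)] sum_list_pt[OF assms(4)]
    by (simp add: sum.distrib)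
qed

lemma cnt_sym:
  assumes "is_partition p" "is_partition q"
  defines "S \<equiv> sum_list p + sum_list q - max (pt p 0) (pt q 0)"
  shows "d \<le> S \<Longrightarrow> cnt p q d = cnt p q (S - d)" and "S < d \<Longrightarrow> cnt p q d = 0"
proof -
  define L where "L = length p + length q"
  have L: "length p \<le> L" "length q \<le> L" unfolding L_def by auto
  let ?A = "bA p q" and ?B = "bB p q"
  have SS: "(\<Sum>i<L. ?A i + ?B i) = S"
    using sum_max_min[OF assms(1,2) L] unfolding S_def by simp
  have AB: "f \<in> box ?A ?B \<Longrightarrow> (\<Sum>i<L. f i) \<le> S" for f
    unfolding SS[symmetric] box_def by (auto intro!: sum_mono simp: trans_le_add2)
  show "S < d \<Longrightarrow> cnt p q d = 0"
  proof -
    assume "S < d"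
    then have "{f \<in> box ?A ?B. (\<Sum>i<L. f i) = d} = {}" using AB by fastforce
    then show ?thesis unfolding cnt_box[OF assms(1,2) L(1)] by (simp only: card.empty)
  qed
  assume d: "d \<le> S"
  define rf where "rf f = (\<lambda>i. ?A i + ?B i - f i)" for f :: "nat \<Rightarrow> nat"
  have rfb: "f \<in> box ?A ?B \<Longrightarrow> rf f \<in> box ?A ?B" for f
  proof -
    assume "f \<in> box ?A ?B"
    then have h: "\<And>i. ?A i \<le> f i \<and> f i \<le> ?B i" by (simp add: box_def)
    show ?thesis unfolding box_def rf_def
    proof (intro CollectI allI)
      fix i show "?A i \<le> ?A i + ?B i - f i \<and> ?A i + ?B i - f i \<le> ?B i" using h[of i] by arith
    qed
  qed
  have rfrf: "f \<in> box ?A ?B \<Longrightarrow> rf (rf f) = f" for f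
  proof -
    assume "f \<in> box ?A ?B"
    then have h: "\<And>i. ?A i \<le> f i \<and> f i \<le> ?B i" by (simp add: box_def)
    show ?thesis unfolding rf_def
    proof (rule ext)
      fix i show "?A i + ?B i - (?A i + ?B i - f i) = f i" using h[of i] by arith
    qed
  qed
  have rfs: "f \<in> box ?A ?B \<Longrightarrow> (\<Sum>i<L. rf f i) = S - (\<Sum>i<L. f i)" for f
  proof -
    assume f: "f \<in> box ?A ?B"
    have "(\<Sum>i<L. rf f i) + (\<Sum>i<L. f i) = (\<Sum>i<L. ?A i + ?B i)"
      unfolding sum.distrib[symmetric] rf_def
    proof (intro sum.cong refl)
      fix i show "?A i + ?B i - f i + f i = ?A i + ?B i" using f by (simp add: box_def le_add2 trans_le_add2)
    qed
    then show ?thesis using SS by simp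
  qed
  have "bij_betw rf {f \<in> box ?A ?B. (\<Sum>i<L. f i) = d} {f \<in> box ?A ?B. (\<Sum>i<L. f i) = S - d}"
  proof (rule bij_betw_byWitness[where f' = rf])
    show "\<forall>a\<in>{f \<in> box ?A ?B. (\<Sum>i<L. f i) = d}. rf (rf a) = a" using rfrf by auto
    show "\<forall>a'\<in>{f \<in> box ?A ?B. (\<Sum>i<L. f i) = S - d}. rf (rf a') = a'" using rfrf by auto
    show "rf ` {f \<in> box ?A ?B. (\<Sum>i<L. f i) = d} \<subseteq> {f \<in> box ?A ?B. (\<Sum>i<L. f i) = S - d}"
      using rfb rfs by auto
    show "rf ` {f \<in> box ?A ?B. (\<Sum>i<L. f i) = S - d} \<subseteq> {f \<in> box ?A ?B. (\<Sum>i<L. f i) = d}"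
      using rfb rfs d by auto
  qed
  then show "cnt p q d = cnt p q (S - d)"
    unfolding cnt_box[OF assms(1,2) L(1)] by (rule bij_betw_same_card)
qed

lemma tele: "(\<Sum>d\<le>(D::nat). (c d - (if d = 0 then 0 else c (d - 1))) :: int) = c D"
  by (induction D) auto

lemma arith_identity:
  fixes c :: "nat \<Rightarrow> int" and n m r M S :: nat
  assumes "r \<le> min m n" "S + M = n + m"
    and sym: "\<And>d. d \<le> S \<Longrightarrow> c d = c (S - d)" and z: "\<And>d. S < d \<Longrightarrow> c d = 0"
  shows "c r = (\<Sum>d\<le>r. if M \<le> n + m - d - r then c d - (if d = 0 then 0 else c (d - 1)) else 0)"
proof -
  consider "M + 2 * r \<le> n + m" | "M + r \<le> n + m" "n + m < M + 2 * r" | "n + m < M + r" by linarith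
  then show ?thesis
  proof cases
    case 1
    then have "(\<Sum>d\<le>r. if M \<le> n + m - d - r then c d - (if d = 0 then 0 else c (d - 1)) else 0)
       = (\<Sum>d\<le>r. c d - (if d = 0 then 0 else c (d - 1)))" by (intro sum.cong) auto
    then show ?thesis using tele by simp
  next
    case 2
    define D where "D = n + m - M - r"
    have D: "D < r" "D = S - r" "r \<le> S" using 2 assms(2) unfolding D_def by auto
    have "(\<Sum>d\<le>r. if M \<le> n + m - d - r then c d - (if d = 0 then 0 else c (d - 1)) else 0)
       = (\<Sum>d\<in>{..D}. c d - (if d = 0 then 0 else c (d - 1)))"
    proof (rule sum.mono_neutral_cong_right)
      show "{..D} \<subseteq> {..r}" using D by auto
      show "\<forall>i\<in>{..r} - {..D}. (if M \<le> n + m - i - r then c i - (if i = 0 then 0 else c (i - 1)) else 0) = 0"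
        using 2 D_def assms(1) by auto
      show "\<And>x. x \<in> {..D} \<Longrightarrow> (if M \<le> n + m - x - r then c x - (if x = 0 then 0 else c (x - 1)) else 0) = c x - (if x = 0 then 0 else c (x - 1))"
        using 2 D_def assms(1) by auto
    qed simp
    then show ?thesis using tele sym[OF D(3)] D by simp
  next
    case 3
    then have "r > S" using assms(2) by linarith
    then have "c r = 0" using z by simp
    moreover have "(\<Sum>d\<le>r. if M \<le> n + m - d - r then c d - (if d = 0 then 0 else c (d - 1)) else 0) = 0"
      using 3 assms(1) by (intro sum.neutral) auto
    ultimately show ?thesis by simp
  qed
qed


definition sset :: "nat list \<Rightarrow> mono \<Rightarrow> (nat \<times> nat \<Rightarrow> nat) set" where
  "sset la \<alpha> = {T. is_ssyt la T \<and> (\<forall>k. card {c \<in> cells la. T c = k} = Poly_Mapping.lookup \<alpha> k)}"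

lemma schur_sset: "schur la \<alpha> = int (card (sset la \<alpha>))"
  by (simp add: schur_def sset_def)

lemma cells_Sigma: "cells la = Sigma {..<length la} (\<lambda>i. {..<la ! i})"
  unfolding cells_def by auto

lemma finite_cells: "finite (cells la)"
  unfolding cells_Sigma by auto

lemma card_cells: "card (cells la) = sum_list la"
  unfolding cells_Sigma by (simp add: card_SigmaI sum_list_sum_nth atLeast0LessThan)

lemma sset_val:
  assumes "T \<in> sset la \<alpha>" "c \<in> cells la"
  shows "0 < Poly_Mapping.lookup \<alpha> (T c)"
proof -
  have 1: "card {c' \<in> cells la. T c' = T c} = Poly_Mapping.lookup \<alpha> (T c)" using assms(1) by (simp add: sset_def)
  have "c \<in> {c' \<in> cells la. T c' = T c}" using assms(2) by simp
  moreover have "finite {c' \<in> cells la. T c' = T c}" using finite_cells[of la] by simp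
  ultimately have "card {c' \<in> cells la. T c' = T c} > 0"
    by (metis card_gt_0_iff empty_iff)
  then show ?thesis using 1 by simp
qed

lemma finite_sset: "finite (sset la \<alpha>)"
proof -
  have "sset la \<alpha> \<subseteq> {T. \<forall>c. (c \<in> cells la \<longrightarrow> T c \<in> Poly_Mapping.keys \<alpha>) \<and> (c \<notin> cells la \<longrightarrow> T c = 0)}"
    using sset_val by (auto simp: sset_def is_ssyt_def in_keys_iff)
  then show ?thesis using finite_set_of_finite_funs[of "cells la" "Poly_Mapping.keys \<alpha>" 0] finite_subset
      finite_cells[of la] by auto
qed

lemma ssyt_row_mono:
  assumes "is_ssyt la T" "(i, j') \<in> cells la" "j \<le> j'"
  shows "T (i, j) \<le> T (i, j')"
  using assms(2,3)
proof (induction j' arbitrary: j)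
  case 0 then show ?case by simp
next
  case (Suc j')
  show ?case
  proof (cases "j = Suc j'")
    case False
    then have "j \<le> j'" using Suc by simp
    have c: "(i, j') \<in> cells la" using Suc.prems(1) by (auto simp: cells_def)
    have "T (i, j) \<le> T (i, j')" using Suc.IH[OF c \<open>j \<le> j'\<close>] .
    also have "\<dots> \<le> T (i, Suc j')" using assms(1) c Suc.prems(1) by (simp add: is_ssyt_def)
    finally show ?thesis .
  qed simp
qed

lemma cells_up:
  assumes "is_partition la" "(Suc i, j) \<in> cells la"
  shows "(i, j) \<in> cells la"
  using assms is_partition_Suc[OF assms(1), of i] unfolding cells_pt by auto

lemma ssyt_ge_row:
  assumes "is_partition la" "is_ssyt la T" "(i, j) \<in> cells la"
  shows "i \<le> T (i, j)"
  using assms(3)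
proof (induction i)
  case (Suc i)
  have c: "(i, j) \<in> cells la" using cells_up[OF assms(1) Suc.prems] .
  have "i \<le> T (i, j)" using Suc.IH[OF c] .
  also have "\<dots> < T (Suc i, j)" using assms(2) c Suc.prems by (simp add: is_ssyt_def)
  finally show ?case by simp
qed simp

lemma card_le_val:
  assumes "T \<in> sset la \<alpha>"
  shows "card {c \<in> cells la. T c \<le> i} = (\<Sum>v\<le>i. Poly_Mapping.lookup \<alpha> v)"
proof -
  have "{c \<in> cells la. T c \<le> i} = (\<Union>v\<in>{..i}. {c \<in> cells la. T c = v})" by auto
  moreover have "card (\<Union>v\<in>{..i}. {c \<in> cells la. T c = v}) = (\<Sum>v\<le>i. card {c \<in> cells la. T c = v})"
    by (rule card_UN_disjoint) (auto simp: finite_cells)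
  ultimately have "card {c \<in> cells la. T c \<le> i} = (\<Sum>v\<le>i. card {c \<in> cells la. T c = v})"
    by simp
  then show ?thesis using assms by (simp add: sset_def)
qed

lemma card_rows_le:
  "card {c \<in> cells la. fst c \<le> i} = (\<Sum>j\<le>i. pt la j)"
proof -
  have "{c \<in> cells la. fst c \<le> i} = Sigma {..i} (\<lambda>r. {..<pt la r})"
    unfolding cells_pt by auto
  then show ?thesis by (simp add: card_SigmaI)
qed

lemma sset_dom:
  assumes "is_partition la" "T \<in> sset la \<alpha>"
  shows "(\<Sum>v\<le>i. Poly_Mapping.lookup \<alpha> v) \<le> (\<Sum>j\<le>i. pt la j)"
proof -
  have "{c \<in> cells la. T c \<le> i} \<subseteq> {c \<in> cells la. fst c \<le> i}"
    using ssyt_ge_row[OF assms(1)] assms(2) by (force simp: sset_def)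
  then have "card {c \<in> cells la. T c \<le> i} \<le> card {c \<in> cells la. fst c \<le> i}"
    by (intro card_mono) (auto simp: finite_cells)
  then show ?thesis using card_le_val[OF assms(2)] card_rows_le by simp
qed

definition mono_of :: "nat list \<Rightarrow> mono" where
  "mono_of la = Abs_poly_mapping (pt la)"

lemma lookup_mono_of: "Poly_Mapping.lookup (mono_of la) = pt la"
proof -
  have "{i. pt la i \<noteq> 0} \<subseteq> {..<length la}" by (auto simp: pt_def)
  then have "finite {i. pt la i \<noteq> 0}" using finite_subset by blast
  then show ?thesis by (simp add: mono_of_def)
qed

lemma schur_dom:
  assumes "is_partition ka" "schur ka (mono_of la) \<noteq> 0"
  shows "(\<Sum>j\<le>i. pt la j) \<le> (\<Sum>j\<le>i. pt ka j)"
proof -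
  from assms(2) obtain T where "T \<in> sset ka (mono_of la)"
    unfolding schur_sset by (metis all_not_in_conv card.empty of_nat_0)
  from sset_dom[OF assms(1) this] show ?thesis by (simp add: lookup_mono_of)
qed

lemma schur_diag:
  assumes "is_partition la"
  shows "schur la (mono_of la) = 1"
proof -
  define T0 where "T0 = (\<lambda>c. if c \<in> cells la then fst c else 0)"
  have "sset la (mono_of la) = {T0}"
  proof (rule antisym; rule subsetI)
    fix T assume T: "T \<in> sset la (mono_of la)"
    have eq: "{c \<in> cells la. T c \<le> i} = {c \<in> cells la. fst c \<le> i}" for i
    proof (rule card_subset_eq)
      show "finite {c \<in> cells la. fst c \<le> i}" by (simp add: finite_cells)
      show "{c \<in> cells la. T c \<le> i} \<subseteq> {c \<in> cells la. fst c \<le> i}"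
        using ssyt_ge_row[OF assms] T by (force simp: sset_def)
      show "card {c \<in> cells la. T c \<le> i} = card {c \<in> cells la. fst c \<le> i}"
        using card_le_val[OF T] card_rows_le by (simp add: lookup_mono_of)
    qed
    have "T c = T0 c" for c
    proof (cases "c \<in> cells la")
      case True
      then have "T c \<le> fst c" using eq[of "fst c"] by blast
      moreover have "fst c \<le> T c" using ssyt_ge_row[OF assms, of T "fst c" "snd c"] T True
        by (simp add: sset_def)
      ultimately show ?thesis using True by (simp add: T0_def)
    next
      case False
      then show ?thesis using T by (cases c) (simp add: T0_def sset_def is_ssyt_def)
    qed
    then show "T \<in> {T0}" by auto
  next
    fix T assume "T \<in> {T0}"
    then have T: "T = T0" by simp
    have "is_ssyt la T0" unfolding is_ssyt_def T0_def by auto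
    moreover have "card {c \<in> cells la. T0 c = k} = Poly_Mapping.lookup (mono_of la) k" for k
    proof -
      have "{c \<in> cells la. T0 c = k} = {k} \<times> {..<pt la k}"
        unfolding T0_def cells_pt by auto
      then show ?thesis by (simp add: lookup_mono_of)
    qed
    ultimately show "T \<in> sset la (mono_of la)" using T by (simp add: sset_def)
  qed
  then show ?thesis by (simp add: schur_sset)
qed


definition good :: "(nat list \<times> nat list \<Rightarrow> int) \<Rightarrow> bool" where
  "good c \<longleftrightarrow> finite {p. c p \<noteq> 0} \<and> (\<forall>p. c p \<noteq> 0 \<longrightarrow> is_partition (fst p) \<and> is_partition (snd p))"

lemma expand_eval:
  assumes "finite S" "{p. c p \<noteq> 0} \<subseteq> S"
  shows "schur_expand c x = (\<Sum>p\<in>S. c p * sf_tensor (schur (fst p)) (schur (snd p)) x)"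
proof -
  have "schur_expand c x = (\<Sum>p\<in>{p. c p \<noteq> 0}. c p * sf_tensor (schur (fst p)) (schur (snd p)) x)"
    unfolding schur_expand_def sum_fun_apply ..
  also have "\<dots> = (\<Sum>p\<in>S. c p * sf_tensor (schur (fst p)) (schur (snd p)) x)"
    by (rule sum.mono_neutral_left) (use assms in auto)
  finally show ?thesis .
qed

lemma expand_sum:
  assumes "finite D" "\<And>d. d \<in> D \<Longrightarrow> finite {p. c d p \<noteq> 0}"
  shows "schur_expand (\<lambda>p. \<Sum>d\<in>D. c d p) = (\<Sum>d\<in>D. schur_expand (c d))"
proof (rule ext)
  fix x
  define S where "S = (\<Union>d\<in>D. {p. c d p \<noteq> 0})"
  have S: "finite S" using assms by (simp add: S_def)
  have sub: "{p. (\<Sum>d\<in>D. c d p) \<noteq> 0} \<subseteq> S"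
  proof
    fix p assume "p \<in> {p. (\<Sum>d\<in>D. c d p) \<noteq> 0}"
    then obtain d where "d \<in> D" "c d p \<noteq> 0" by (metis (mono_tags, lifting) mem_Collect_eq sum.neutral)
    then show "p \<in> S" by (auto simp: S_def)
  qed
  have "schur_expand (\<lambda>p. \<Sum>d\<in>D. c d p) x = (\<Sum>p\<in>S. (\<Sum>d\<in>D. c d p) * sf_tensor (schur (fst p)) (schur (snd p)) x)"
    by (rule expand_eval[OF S sub])
  also have "\<dots> = (\<Sum>d\<in>D. \<Sum>p\<in>S. c d p * sf_tensor (schur (fst p)) (schur (snd p)) x)"
    by (simp add: sum_distrib_right sum.swap[of _ S])
  also have "\<dots> = (\<Sum>d\<in>D. schur_expand (c d) x)"
    by (intro sum.cong refl expand_eval[symmetric] S) (auto simp: S_def)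
  finally show "schur_expand (\<lambda>p. \<Sum>d\<in>D. c d p) x = (\<Sum>d\<in>D. schur_expand (c d)) x"
    by (simp add: sum_fun_apply)
qed

lemma expand_diff:
  assumes "finite {p. c1 p \<noteq> 0}" "finite {p. c2 p \<noteq> 0}"
  shows "schur_expand (\<lambda>p. c1 p - c2 p) = schur_expand c1 - schur_expand c2"
proof (rule ext)
  fix x
  define S where "S = {p. c1 p \<noteq> 0} \<union> {p. c2 p \<noteq> 0}"
  have S: "finite S" using assms by (simp add: S_def)
  have "schur_expand (\<lambda>p. c1 p - c2 p) x = (\<Sum>p\<in>S. (c1 p - c2 p) * sf_tensor (schur (fst p)) (schur (snd p)) x)"
    by (rule expand_eval[OF S]) (auto simp: S_def)
  also have "\<dots> = (\<Sum>p\<in>S. c1 p * sf_tensor (schur (fst p)) (schur (snd p)) x)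
                 - (\<Sum>p\<in>S. c2 p * sf_tensor (schur (fst p)) (schur (snd p)) x)"
    by (simp add: left_diff_distrib sum_subtractf)
  also have "\<dots> = schur_expand c1 x - schur_expand c2 x"
    using expand_eval[OF S, of c1 x] expand_eval[OF S, of c2 x] by (auto simp: S_def)
  finally show "schur_expand (\<lambda>p. c1 p - c2 p) x = (schur_expand c1 - schur_expand c2) x" by simp
qed

definition wt :: "nat \<Rightarrow> nat list \<Rightarrow> nat" where
  "wt L a = (\<Sum>i<L. \<Sum>j\<le>i. pt a j)"

lemma wt_mono:
  assumes "\<And>i. (\<Sum>j\<le>i. pt b j) \<le> (\<Sum>j\<le>i. pt a j)"
  shows "wt L b \<le> wt L a"
  unfolding wt_def by (rule sum_mono) (rule assms)

lemma wt_strict: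
  assumes "is_partition a" "is_partition b" "length a \<le> L" "length b \<le> L"
    and dom: "\<And>i. (\<Sum>j\<le>i. pt b j) \<le> (\<Sum>j\<le>i. pt a j)" and "a \<noteq> b"
  shows "wt L b < wt L a"
proof -
  have ex: "\<exists>i. pt a i \<noteq> pt b i" using partition_eqI[OF assms(1,2)] assms(6) by blast
  define i0 where "i0 = (LEAST i. pt a i \<noteq> pt b i)"
  have ne: "pt a i0 \<noteq> pt b i0" unfolding i0_def by (rule LeastI_ex[OF ex])
  have eq: "j < i0 \<Longrightarrow> pt a j = pt b j" for j unfolding i0_def using not_less_Least by blast
  have "i0 < L" using ne assms(3,4) pt_ge by (metis not_le le_trans)
  have "(\<Sum>j\<le>i0. pt b j) < (\<Sum>j\<le>i0. pt a j)"
  proof -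
    have s: "(\<Sum>j<i0. pt b j) = (\<Sum>j<i0. pt a j)" using eq by simp
    have "(\<Sum>j\<le>i0. pt b j) = (\<Sum>j<i0. pt b j) + pt b i0" by (simp add: lessThan_Suc_atMost[symmetric])
    moreover have "(\<Sum>j\<le>i0. pt a j) = (\<Sum>j<i0. pt a j) + pt a i0" by (simp add: lessThan_Suc_atMost[symmetric])
    ultimately show ?thesis using dom[of i0] s ne by linarith
  qed
  then show ?thesis unfolding wt_def
    using \<open>i0 < L\<close> dom by (intro sum_strict_mono_ex1) auto
qed

lemma expand_inj:
  assumes "good c" "schur_expand c = 0"
  shows "c p = 0"
proof (rule ccontr)
  assume cp: "c p \<noteq> 0"
  define S where "S = {p. c p \<noteq> 0}"
  have "p \<in> S" using cp by (simp add: S_def)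
  then have S: "finite S" "S \<noteq> {}" using assms(1) unfolding good_def S_def by blast+
  have part: "q \<in> S \<Longrightarrow> is_partition (fst q) \<and> is_partition (snd q)" for q
    using assms(1) unfolding good_def S_def by blast
  define L where "L = Max ((\<lambda>q. length (fst q) + length (snd q)) ` S)"
  have Lb: "q \<in> S \<Longrightarrow> length (fst q) \<le> L \<and> length (snd q) \<le> L" for q
  proof -
    assume q: "q \<in> S"
    have "length (fst q) + length (snd q) \<le> L" unfolding L_def by (rule Max_ge) (use S q in auto)
    then show ?thesis by simp
  qed
  define W where "W q = wt L (fst q) + wt L (snd q)" for q
  have "Max (W ` S) \<in> W ` S" by (rule Max_in) (use S in auto)
  then obtain p0 where p0S: "p0 \<in> S" and p0W: "W p0 = Max (W ` S)" by auto
  have p0: "p0 \<in> S" "\<And>q. q \<in> S \<Longrightarrow> W q \<le> W p0"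
    using p0S apply simp
    unfolding p0W by (rule Max_ge) (use S in auto)
  define x where "x = (mono_of (fst p0), mono_of (snd p0))"
  have "schur_expand c x = (\<Sum>q\<in>S. c q * sf_tensor (schur (fst q)) (schur (snd q)) x)"
    by (rule expand_eval[OF S(1)]) (simp add: S_def)
  also have "\<dots> = c p0 * sf_tensor (schur (fst p0)) (schur (snd p0)) x"
  proof -
   have rest: "(\<Sum>q\<in>S - {p0}. c q * sf_tensor (schur (fst q)) (schur (snd q)) x) = 0"
   proof (rule sum.neutral, rule ballI)
    fix q assume q: "q \<in> S - {p0}"
    show "c q * sf_tensor (schur (fst q)) (schur (snd q)) x = 0"
    proof (rule ccontr)
      assume "c q * sf_tensor (schur (fst q)) (schur (snd q)) x \<noteq> 0"
      then have n1: "schur (fst q) (mono_of (fst p0)) \<noteq> 0" and n2: "schur (snd q) (mono_of (snd p0)) \<noteq> 0"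
        by (auto simp: sf_tensor_def x_def)
      have pq: "is_partition (fst q)" "is_partition (snd q)" using part q by auto
      have pp: "is_partition (fst p0)" "is_partition (snd p0)" using part p0 by auto
      have d1: "\<And>i. (\<Sum>j\<le>i. pt (fst p0) j) \<le> (\<Sum>j\<le>i. pt (fst q) j)" using schur_dom[OF pq(1) n1] .
      have d2: "\<And>i. (\<Sum>j\<le>i. pt (snd p0) j) \<le> (\<Sum>j\<le>i. pt (snd q) j)" using schur_dom[OF pq(2) n2] .
      have "q \<noteq> p0" using q by auto
      then have "fst q \<noteq> fst p0 \<or> snd q \<noteq> snd p0" by (metis prod.expand)
      then have "W p0 < W q"
      proof
        assume "fst q \<noteq> fst p0"
        then have "wt L (fst p0) < wt L (fst q)"
          using wt_strict[OF pq(1) pp(1)] Lb q p0 d1 by auto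
        moreover have "wt L (snd p0) \<le> wt L (snd q)" using wt_mono d2 by blast
        ultimately show ?thesis by (simp add: W_def)
      next
        assume "snd q \<noteq> snd p0"
        then have "wt L (snd p0) < wt L (snd q)"
          using wt_strict[OF pq(2) pp(2)] Lb q p0 d2 by auto
        moreover have "wt L (fst p0) \<le> wt L (fst q)" using wt_mono d1 by blast
        ultimately show ?thesis by (simp add: W_def)
      qed
      then show False using p0(2)[of q] q by simp
    qed
   qed
   show ?thesis using sum.remove[OF S(1) p0(1), of "\<lambda>q. c q * sf_tensor (schur (fst q)) (schur (snd q)) x"] rest
     by simp
  qed
  also have "\<dots> = c p0"
    using part[OF p0(1)] by (simp add: sf_tensor_def x_def schur_diag)
  finally have "c p0 = 0" using assms(2) by simp
  then show False using p0(1) by (simp add: S_def)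
qed

lemma coeffs_unique:
  assumes "good c"
  shows "schur_coeffs (schur_expand c) = c"
  unfolding schur_coeffs_def
proof (rule the_equality)
  show "finite {p. c p \<noteq> 0} \<and> (\<forall>p. c p \<noteq> 0 \<longrightarrow> is_partition (fst p) \<and> is_partition (snd p)) \<and>
        schur_expand c = schur_expand c" using assms by (simp add: good_def)
  fix c' assume c': "finite {p. c' p \<noteq> 0} \<and> (\<forall>p. c' p \<noteq> 0 \<longrightarrow> is_partition (fst p) \<and> is_partition (snd p)) \<and>
        schur_expand c = schur_expand c'"
  have f1: "finite {p. c' p \<noteq> 0}" and p1: "\<forall>p. c' p \<noteq> 0 \<longrightarrow> is_partition (fst p) \<and> is_partition (snd p)"
    and e: "schur_expand c = schur_expand c'" using c' by auto
  have f2: "finite {p. c p \<noteq> 0}" and p2: "\<forall>p. c p \<noteq> 0 \<longrightarrow> is_partition (fst p) \<and> is_partition (snd p)"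
    using assms by (auto simp: good_def)
  have sub: "{p. c' p - c p \<noteq> 0} \<subseteq> {p. c' p \<noteq> 0} \<union> {p. c p \<noteq> 0}" by auto
  have g: "good (\<lambda>p. c' p - c p)"
    unfolding good_def
  proof
    show "finite {p. c' p - c p \<noteq> 0}" using finite_subset[OF sub] f1 f2 by blast
    show "\<forall>p. c' p - c p \<noteq> 0 \<longrightarrow> is_partition (fst p) \<and> is_partition (snd p)"
      using p1 p2 by (metis diff_0_right diff_self)
  qed
  have "schur_expand (\<lambda>p. c' p - c p) = schur_expand c' - schur_expand c"
    by (rule expand_diff[OF f1 f2])
  then have "schur_expand (\<lambda>p. c' p - c p) = 0" using e by simp
  then show "c' = c" using expand_inj[OF g] by (metis eq_iff_diff_eq_0 ext)
qed


definition HSm :: "nat list \<Rightarrow> nat \<Rightarrow> nat list set" where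
  "HSm la e = {rho. is_partition rho \<and> hs la rho \<and> sum_list rho + e = sum_list la}"

definition HSp :: "nat list \<Rightarrow> nat \<Rightarrow> nat list set" where
  "HSp mu k = {la. is_partition la \<and> hs la mu \<and> sum_list la = sum_list mu + k}"

lemma finite_HSm: "finite (HSm la e)"
  by (rule finite_subset[OF _ finite_partitions_of[of "sum_list la - e"]]) (auto simp: HSm_def partitions_of_def)

lemma finite_HSp: "finite (HSp mu k)"
  by (rule finite_subset[OF _ finite_partitions_of[of "sum_list mu + k"]]) (auto simp: HSp_def partitions_of_def)

lemma ssyt_zero: "is_ssyt la T \<Longrightarrow> c \<notin> cells la \<Longrightarrow> T c = 0"
  unfolding is_ssyt_def by blast

definition ext :: "nat list \<Rightarrow> nat list \<Rightarrow> nat \<Rightarrow> (nat \<times> nat \<Rightarrow> nat) \<Rightarrow> (nat \<times> nat \<Rightarrow> nat)" where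
  "ext la rho N T' = (\<lambda>c. if c \<in> cells la \<and> c \<notin> cells rho then N else T' c)"

lemma hs_cells: "hs la rho \<Longrightarrow> cells rho \<subseteq> cells la"
proof
  fix c assume h: "hs la rho" "c \<in> cells rho"
  then have "snd c < pt rho (fst c)" by (auto simp: cells_pt)
  also have "\<dots> \<le> pt la (fst c)" using h(1) by (simp add: hs_def)
  finally show "c \<in> cells la" by (auto simp: cells_pt)
qed

lemma sset_lt_N:
  assumes "T \<in> sset rho \<beta>" "c \<in> cells rho" "\<forall>k. N \<le> k \<longrightarrow> Poly_Mapping.lookup \<beta> k = 0"
  shows "T c < N"
proof -
  have "0 < Poly_Mapping.lookup \<beta> (T c)" using sset_val[OF assms(1,2)] .
  then have "\<not> N \<le> T c" using assms(3) by (metis less_irrefl)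
  then show ?thesis by simp
qed

lemma sset_le_N:
  assumes "T \<in> sset la \<alpha>" "c \<in> cells la" "\<forall>k>N. Poly_Mapping.lookup \<alpha> k = 0"
  shows "T c \<le> N"
proof -
  have "0 < Poly_Mapping.lookup \<alpha> (T c)" using sset_val[OF assms(1,2)] .
  then have "\<not> N < T c" using assms(3) by (metis less_irrefl)
  then show ?thesis by simp
qed

lemma card_cells_diff:
  assumes "cells rho \<subseteq> cells la"
  shows "card (cells la - cells rho) = sum_list la - sum_list rho"
  using card_Diff_subset[OF finite_cells assms] by (simp add: card_cells)

lemma downclosed:
  assumes "finite A" "\<And>j j'. j \<in> A \<Longrightarrow> j' < j \<Longrightarrow> j' \<in> A"
  shows "A = {..<card A}"
proof (rule antisym; rule subsetI)
  fix j assume j: "j \<in> A"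
  have "{..j} \<subseteq> A" using assms(2) j by (auto simp: le_less)
  then have "card {..j} \<le> card A" by (rule card_mono[OF assms(1)])
  then show "j \<in> {..<card A}" by simp
next
  fix j assume j: "j \<in> {..<card A}"
  show "j \<in> A"
  proof (rule ccontr)
    assume "j \<notin> A"
    have "A \<subseteq> {..<j}"
    proof
      fix a assume a: "a \<in> A"
      show "a \<in> {..<j}"
      proof (rule ccontr)
        assume "a \<notin> {..<j}"
        then have "j \<le> a" by simp
        then have "j \<in> A" using a assms(2)[of a j] by (cases "j = a") auto
        then show False using \<open>j \<notin> A\<close> by simp
      qed
    qed
    then have "card A \<le> j" using card_mono[of "{..<j}" A] by simp
    then show False using j by simp
  qed
qed

lemma pt_from_cells:
  assumes "cells a = cells b" "is_partition a" "is_partition b"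
  shows "a = b"
proof (rule partition_eqI[OF assms(2,3)])
  fix i
  have "{j. (i, j) \<in> cells a} = {..<pt a i}" "{j. (i, j) \<in> cells b} = {..<pt b i}"
    unfolding cells_pt by auto
  then have "{..<pt a i} = {..<pt b i}" using assms(1) by simp
  then show "pt a i = pt b i" by (metis card_lessThan)
qed

lemma beta_N:
  fixes \<alpha> \<beta> :: mono and N :: nat
  assumes aN: "\<forall>k>N. Poly_Mapping.lookup \<alpha> k = 0"
    and beta: "Poly_Mapping.lookup \<beta> = (\<lambda>k. if k = N then 0 else Poly_Mapping.lookup \<alpha> k)"
  shows "\<forall>k. N \<le> k \<longrightarrow> Poly_Mapping.lookup \<beta> k = 0"
proof (intro allI impI)
  fix k assume k: "N \<le> k"
  show "Poly_Mapping.lookup \<beta> k = 0"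
  proof (cases "k = N")
    case True then show ?thesis using beta by simp
  next
    case False then have "N < k" using k by simp
    then show ?thesis using beta aN by simp
  qed
qed

lemma ext_in:
  assumes la: "is_partition la" and rho: "rho \<in> HSm la (Poly_Mapping.lookup \<alpha> N)"
    and aN: "\<forall>k>N. Poly_Mapping.lookup \<alpha> k = 0"
    and beta: "Poly_Mapping.lookup \<beta> = (\<lambda>k. if k = N then 0 else Poly_Mapping.lookup \<alpha> k)"
    and T': "T' \<in> sset rho \<beta>"
  shows "ext la rho N T' \<in> sset la \<alpha>"
proof -
  have rp: "is_partition rho" "hs la rho" "sum_list rho + Poly_Mapping.lookup \<alpha> N = sum_list la"
    using rho by (auto simp: HSm_def)
  have sub: "cells rho \<subseteq> cells la" using hs_cells[OF rp(2)] .
  have bN: "\<forall>k. N \<le> k \<longrightarrow> Poly_Mapping.lookup \<beta> k = 0" using beta_N[OF aN beta] .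
  have lt: "c \<in> cells rho \<Longrightarrow> T' c < N" for c using sset_lt_N[OF T' _ bN] by blast
  have ss: "is_ssyt rho T'" and cont: "\<And>k. card {c \<in> cells rho. T' c = k} = Poly_Mapping.lookup \<beta> k"
    using T' by (auto simp: sset_def)
  let ?E = "ext la rho N T'"
  have "is_ssyt la ?E"
    unfolding is_ssyt_def
  proof (intro conjI allI impI)
    fix i j assume c: "(i, j) \<in> cells la \<and> (i, Suc j) \<in> cells la"
    show "?E (i, j) \<le> ?E (i, Suc j)"
    proof (cases "(i, Suc j) \<in> cells rho")
      case True
      then have "(i, j) \<in> cells rho" by (auto simp: cells_pt)
      then show ?thesis using True ss by (simp add: ext_def is_ssyt_def)
    next
      case False
      then show ?thesis using c lt by (auto simp: ext_def less_imp_le)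
    qed
  next
    fix i j assume c: "(i, j) \<in> cells la \<and> (Suc i, j) \<in> cells la"
    show "?E (i, j) < ?E (Suc i, j)"
    proof (cases "(Suc i, j) \<in> cells rho")
      case True
      then have "(i, j) \<in> cells rho" using cells_up[OF rp(1)] by blast
      then show ?thesis using True ss by (simp add: ext_def is_ssyt_def)
    next
      case False
      have "j < pt la (Suc i)" using c by (simp add: cells_pt)
      also have "\<dots> \<le> pt rho i" using rp(2) by (simp add: hs_def)
      finally have "(i, j) \<in> cells rho" by (simp add: cells_pt)
      then show ?thesis using False c lt by (simp add: ext_def)
    qed
  next
    fix c assume "c \<notin> cells la"
    then have "c \<notin> cells rho" using sub by blast
    then show "?E c = 0" using ssyt_zero[OF ss] \<open>c \<notin> cells la\<close> unfolding ext_def by simp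
  qed
  moreover have "card {c \<in> cells la. ?E c = k} = Poly_Mapping.lookup \<alpha> k" for k
  proof (cases "k = N")
    case True
    have "{c \<in> cells la. ?E c = k} = cells la - cells rho"
      using lt True by (auto simp: ext_def)
    then show ?thesis using card_cells_diff[OF sub] rp(3) True by simp
  next
    case False
    have "{c \<in> cells la. ?E c = k} = {c \<in> cells rho. T' c = k}"
      using False sub by (auto simp: ext_def)
    then show ?thesis using cont[of k] beta False by simp
  qed
  ultimately show ?thesis by (simp add: sset_def)
qed

lemma ext_cells:
  assumes "rho \<in> HSm la e" "T' \<in> sset rho \<beta>" "\<forall>k. N \<le> k \<longrightarrow> Poly_Mapping.lookup \<beta> k = 0"
  shows "cells rho = {c \<in> cells la. ext la rho N T' c < N}"
proof -
  have sub: "cells rho \<subseteq> cells la" using assms(1) hs_cells by (auto simp: HSm_def)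
  show ?thesis using sset_lt_N[OF assms(2) _ assms(3)] sub by (auto simp: ext_def)
qed

lemma ext_surj:
  assumes la: "is_partition la" and aN: "\<forall>k>N. Poly_Mapping.lookup \<alpha> k = 0"
    and beta: "Poly_Mapping.lookup \<beta> = (\<lambda>k. if k = N then 0 else Poly_Mapping.lookup \<alpha> k)"
    and T: "T \<in> sset la \<alpha>"
  shows "\<exists>rho\<in>HSm la (Poly_Mapping.lookup \<alpha> N). \<exists>T'\<in>sset rho \<beta>. T = ext la rho N T'"
proof -
  have ss: "is_ssyt la T" and cont: "\<And>k. card {c \<in> cells la. T c = k} = Poly_Mapping.lookup \<alpha> k"
    using T by (auto simp: sset_def)
  have leN: "c \<in> cells la \<Longrightarrow> T c \<le> N" for c using sset_le_N[OF T _ aN] .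
  define A where "A i = {j. j < pt la i \<and> T (i, j) < N}" for i
  define r where "r i = card (A i)" for i
  have finA: "finite (A i)" for i unfolding A_def by auto
  have Aeq: "A i = {..<r i}" for i
    unfolding r_def
  proof (rule downclosed[OF finA])
    fix j j' assume j: "j \<in> A i" and j': "j' < j"
    then have "(i, j) \<in> cells la" by (simp add: A_def cells_pt)
    then have "T (i, j') \<le> T (i, j)" using ssyt_row_mono[OF ss] j' by simp
    then show "j' \<in> A i" using j j' by (auto simp: A_def)
  qed
  have key: "c \<in> cells la \<and> T c < N \<longleftrightarrow> snd c < r (fst c)" for c
  proof -
    have "c \<in> cells la \<and> T c < N \<longleftrightarrow> snd c \<in> A (fst c)"
      by (cases c) (auto simp: A_def cells_pt)
    then show ?thesis using Aeq by auto
  qed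
  have rdec: "r (Suc i) \<le> r i" for i
  proof -
    have "A (Suc i) \<subseteq> A i"
    proof
      fix j assume j: "j \<in> A (Suc i)"
      then have c: "(Suc i, j) \<in> cells la" by (simp add: A_def cells_pt)
      then have c': "(i, j) \<in> cells la" using cells_up[OF la] by blast
      have "T (i, j) < T (Suc i, j)" using ss c c' by (simp add: is_ssyt_def)
      then show "j \<in> A i" using j c' by (auto simp: A_def cells_pt)
    qed
    then show ?thesis unfolding r_def by (rule card_mono[OF finA])
  qed
  have r0: "r (length la) = 0" unfolding r_def A_def by (simp add: pt_ge)
  define rho where "rho = lst r"
  have rho: "is_partition rho" "pt rho = r" using lst_props[OF rdec r0] by (auto simp: rho_def)
  have crho: "cells rho = {c \<in> cells la. T c < N}"
  proof (rule set_eqI)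
    fix c show "c \<in> cells rho \<longleftrightarrow> c \<in> {c \<in> cells la. T c < N}"
      using key[of c] by (cases c) (simp add: cells_pt rho(2))
  qed
  have cr: "c \<in> cells rho \<longleftrightarrow> c \<in> cells la \<and> T c < N" for c using crho by blast
  have hs: "hs la rho"
    unfolding hs_def rho(2)
  proof (intro allI conjI)
    fix i
    have "A i \<subseteq> {..<pt la i}" by (auto simp: A_def)
    then show "r i \<le> pt la i" unfolding r_def using card_mono[of "{..<pt la i}" "A i"] by simp
    have "{..<pt la (Suc i)} \<subseteq> A i"
    proof
      fix j assume "j \<in> {..<pt la (Suc i)}"
      then have c: "(Suc i, j) \<in> cells la" by (simp add: cells_pt)
      then have c': "(i, j) \<in> cells la" using cells_up[OF la] by blast
      have "T (i, j) < T (Suc i, j)" using ss c c' by (simp add: is_ssyt_def)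
      moreover have "T (Suc i, j) \<le> N" using leN[OF c] .
      ultimately have "T (i, j) < N" by simp
      moreover have "j < pt la i" using c' by (simp add: cells_pt)
      ultimately show "j \<in> A i" by (simp add: A_def)
    qed
    then have "card {..<pt la (Suc i)} \<le> card (A i)" by (rule card_mono[OF finA])
    then show "pt la (Suc i) \<le> r i" unfolding r_def by simp
  qed
  have NN: "{c \<in> cells la. T c = N} = cells la - cells rho"
  proof (rule set_eqI)
    fix c show "c \<in> {c \<in> cells la. T c = N} \<longleftrightarrow> c \<in> cells la - cells rho"
    proof -
      have e: "c \<in> cells rho \<longleftrightarrow> c \<in> cells la \<and> T c < N" using crho by blast
      show ?thesis using e leN[of c] by auto
    qed
  qed
  have sub: "cells rho \<subseteq> cells la" unfolding crho by blast
  have size: "sum_list rho + Poly_Mapping.lookup \<alpha> N = sum_list la"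
  proof -
    have "Poly_Mapping.lookup \<alpha> N = card {c \<in> cells la. T c = N}" using cont[of N] by simp
    also have "\<dots> = sum_list la - sum_list rho" unfolding NN by (rule card_cells_diff[OF sub])
    finally have "Poly_Mapping.lookup \<alpha> N = sum_list la - sum_list rho" .
    moreover have "sum_list rho \<le> sum_list la"
      using card_mono[OF finite_cells sub] by (simp add: card_cells)
    ultimately show ?thesis by simp
  qed
  have rhoH: "rho \<in> HSm la (Poly_Mapping.lookup \<alpha> N)" using rho hs size by (simp add: HSm_def)
  define T' where "T' = (\<lambda>c. if c \<in> cells rho then T c else 0)"
  have "is_ssyt rho T'"
    unfolding is_ssyt_def
  proof (intro conjI allI impI)
    fix i j assume h: "(i, j) \<in> cells rho \<and> (i, Suc j) \<in> cells rho"
    then have "(i, j) \<in> cells la \<and> (i, Suc j) \<in> cells la" using sub by blast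
    then have "T (i, j) \<le> T (i, Suc j)" using ss unfolding is_ssyt_def by blast
    then show "T' (i, j) \<le> T' (i, Suc j)" using h by (simp add: T'_def)
  next
    fix i j assume h: "(i, j) \<in> cells rho \<and> (Suc i, j) \<in> cells rho"
    then have "(i, j) \<in> cells la \<and> (Suc i, j) \<in> cells la" using sub by blast
    then have "T (i, j) < T (Suc i, j)" using ss unfolding is_ssyt_def by blast
    then show "T' (i, j) < T' (Suc i, j)" using h by (simp add: T'_def)
  next
    fix c assume "c \<notin> cells rho" then show "T' c = 0" by (simp add: T'_def)
  qed
  moreover have "card {c \<in> cells rho. T' c = k} = Poly_Mapping.lookup \<beta> k" for k
  proof (cases "k = N")
    case True
    then have E: "{c \<in> cells rho. T' c = k} = {}" using crho by (auto simp: T'_def)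
    have "card {c \<in> cells rho. T' c = k} = 0" by (simp only: E card.empty)
    moreover have "Poly_Mapping.lookup \<beta> k = 0" using True beta by simp
    ultimately show ?thesis by simp
  next
    case False
    have "{c \<in> cells rho. T' c = k} = {c \<in> cells la. T c = k}"
    proof (rule set_eqI)
      fix c show "c \<in> {c \<in> cells rho. T' c = k} \<longleftrightarrow> c \<in> {c \<in> cells la. T c = k}"
        using False cr[of c] leN[of c] unfolding T'_def by auto
    qed
    then show ?thesis using cont[of k] beta False by simp
  qed
  ultimately have T'S: "T' \<in> sset rho \<beta>" by (simp add: sset_def)
  have "T = ext la rho N T'"
  proof
    fix c show "T c = ext la rho N T' c"
    proof (cases "c \<in> cells la")
      case True
      show ?thesis
      proof (cases "c \<in> cells rho")
        case True
        then show ?thesis by (simp add: ext_def T'_def)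
      next
        case False
        then have "T c = N" using True cr[of c] leN[of c] by simp
        then show ?thesis using True False by (simp add: ext_def T'_def)
      qed
    next
      case False
      then have "c \<notin> cells rho" using sub by blast
      then show ?thesis using ssyt_zero[OF ss False] False by (simp add: ext_def T'_def)
    qed
  qed
  then show ?thesis using rhoH T'S by blast
qed

lemma branching:
  assumes la: "is_partition la" and aN: "\<forall>k>N. Poly_Mapping.lookup \<alpha> k = 0"
    and beta: "Poly_Mapping.lookup \<beta> = (\<lambda>k. if k = N then 0 else Poly_Mapping.lookup \<alpha> k)"
  shows "card (sset la \<alpha>) = (\<Sum>rho\<in>HSm la (Poly_Mapping.lookup \<alpha> N). card (sset rho \<beta>))"
proof -
  have bN: "\<forall>k. N \<le> k \<longrightarrow> Poly_Mapping.lookup \<beta> k = 0" using beta_N[OF aN beta] .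
  have eq: "sset la \<alpha> = (\<Union>rho\<in>HSm la (Poly_Mapping.lookup \<alpha> N). ext la rho N ` sset rho \<beta>)"
  proof (rule set_eqI)
    fix T show "T \<in> sset la \<alpha> \<longleftrightarrow> T \<in> (\<Union>rho\<in>HSm la (Poly_Mapping.lookup \<alpha> N). ext la rho N ` sset rho \<beta>)"
    proof
      assume "T \<in> sset la \<alpha>"
      then obtain rho T' where "rho \<in> HSm la (Poly_Mapping.lookup \<alpha> N)" "T' \<in> sset rho \<beta>" "T = ext la rho N T'"
        using ext_surj[OF la aN beta] by blast
      then show "T \<in> (\<Union>rho\<in>HSm la (Poly_Mapping.lookup \<alpha> N). ext la rho N ` sset rho \<beta>)" by blast
    next
      assume "T \<in> (\<Union>rho\<in>HSm la (Poly_Mapping.lookup \<alpha> N). ext la rho N ` sset rho \<beta>)"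
      then obtain rho T' where "rho \<in> HSm la (Poly_Mapping.lookup \<alpha> N)" "T' \<in> sset rho \<beta>" "T = ext la rho N T'"
        by blast
      then show "T \<in> sset la \<alpha>" using ext_in[OF la _ aN beta] by blast
    qed
  qed
  have inj: "inj_on (ext la rho N) (sset rho \<beta>)" if "rho \<in> HSm la (Poly_Mapping.lookup \<alpha> N)" for rho
  proof (rule inj_onI)
    fix T1 T2 assume T: "T1 \<in> sset rho \<beta>" "T2 \<in> sset rho \<beta>" "ext la rho N T1 = ext la rho N T2"
    show "T1 = T2"
    proof
      fix c show "T1 c = T2 c"
      proof (cases "c \<in> cells rho")
        case True
        have "ext la rho N T1 c = ext la rho N T2 c" using T(3) by simp
        then show ?thesis using True by (simp add: ext_def)
      next
        case False
        have "is_ssyt rho T1" "is_ssyt rho T2" using T(1,2) by (auto simp: sset_def)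
        then show ?thesis using ssyt_zero False by metis
      qed
    qed
  qed
  have card: "card (sset la \<alpha>) = (\<Sum>rho\<in>HSm la (Poly_Mapping.lookup \<alpha> N). card (ext la rho N ` sset rho \<beta>))"
    unfolding eq
  proof (rule card_UN_disjoint[OF finite_HSm])
    show "\<forall>rho\<in>HSm la (Poly_Mapping.lookup \<alpha> N). finite (ext la rho N ` sset rho \<beta>)"
      using finite_sset by blast
    show "\<forall>r1\<in>HSm la (Poly_Mapping.lookup \<alpha> N). \<forall>r2\<in>HSm la (Poly_Mapping.lookup \<alpha> N). r1 \<noteq> r2 \<longrightarrow>
        ext la r1 N ` sset r1 \<beta> \<inter> ext la r2 N ` sset r2 \<beta> = {}"
    proof (intro ballI impI)
      fix r1 r2 assume r: "r1 \<in> HSm la (Poly_Mapping.lookup \<alpha> N)" "r2 \<in> HSm la (Poly_Mapping.lookup \<alpha> N)" "r1 \<noteq> r2"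
      show "ext la r1 N ` sset r1 \<beta> \<inter> ext la r2 N ` sset r2 \<beta> = {}"
      proof (rule ccontr)
        assume "ext la r1 N ` sset r1 \<beta> \<inter> ext la r2 N ` sset r2 \<beta> \<noteq> {}"
        then obtain T1 T2 where T: "T1 \<in> sset r1 \<beta>" "T2 \<in> sset r2 \<beta>" "ext la r1 N T1 = ext la r2 N T2"
          by auto
        have "cells r1 = cells r2"
          using ext_cells[OF r(1) T(1) bN] ext_cells[OF r(2) T(2) bN] T(3) by simp
        then have "r1 = r2" using pt_from_cells r(1,2) by (auto simp: HSm_def)
        then show False using r(3) by simp
      qed
    qed
  qed
  show ?thesis unfolding card using inj by (intro sum.cong refl card_image) 
qed


definition LL :: "nat list \<Rightarrow> nat list \<Rightarrow> nat" where
  "LL mu sg = length mu + length sg"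

definition Lam :: "nat list \<Rightarrow> nat \<Rightarrow> nat list \<Rightarrow> nat list \<Rightarrow> nat list" where
  "Lam mu k rho sg = lst (\<lambda>i. if i = 0 then sum_list mu + k - (\<Sum>i<LL mu sg. bA mu sg i + bB mu sg i - pt rho i)
                              else bA mu sg (i - 1) + bB mu sg (i - 1) - pt rho (i - 1))"

definition Rho :: "nat list \<Rightarrow> nat list \<Rightarrow> nat list \<Rightarrow> nat list" where
  "Rho mu la sg = lst (\<lambda>i. bA mu sg i + bB mu sg i - pt la (Suc i))"

lemma lam_char:
  "hs la mu \<and> hs la sg \<longleftrightarrow> max (pt mu 0) (pt sg 0) \<le> pt la 0 \<and> (\<lambda>i. pt la (Suc i)) \<in> box (bA mu sg) (bB mu sg)"
proof
  assume h: "hs la mu \<and> hs la sg"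
  have h1: "pt mu i \<le> pt la i \<and> pt la (Suc i) \<le> pt mu i" for i using h by (simp add: hs_def)
  have h2: "pt sg i \<le> pt la i \<and> pt la (Suc i) \<le> pt sg i" for i using h by (simp add: hs_def)
  show "max (pt mu 0) (pt sg 0) \<le> pt la 0 \<and> (\<lambda>i. pt la (Suc i)) \<in> box (bA mu sg) (bB mu sg)"
    unfolding box_def bA_def bB_def using h1 h2 by auto
next
  assume h: "max (pt mu 0) (pt sg 0) \<le> pt la 0 \<and> (\<lambda>i. pt la (Suc i)) \<in> box (bA mu sg) (bB mu sg)"
  have h1: "max (pt mu (Suc i)) (pt sg (Suc i)) \<le> pt la (Suc i) \<and> pt la (Suc i) \<le> min (pt mu i) (pt sg i)" for i
    using h unfolding box_def bA_def bB_def by auto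
  have h0: "pt mu i \<le> pt la i \<and> pt sg i \<le> pt la i" for i
  proof (cases i)
    case 0 then show ?thesis using h by simp
  next
    case (Suc i') then show ?thesis using h1[of i'] by simp
  qed
  show "hs la mu \<and> hs la sg" unfolding hs_def using h0 h1 by auto
qed

lemma box_shift_part:
  assumes "is_partition p" "is_partition q" "max (pt p 0) (pt q 0) \<le> f 0"
    "(\<lambda>i. f (Suc i)) \<in> box (bA p q) (bB p q)"
  shows "is_partition (lst f)" "pt (lst f) = f"
proof -
  have dec: "f (Suc i) \<le> f i" for i
  proof (cases i)
    case 0
    have "f (Suc 0) \<le> bB p q 0" using assms(4) by (simp add: box_def)
    also have "\<dots> \<le> max (pt p 0) (pt q 0)" by (simp add: bB_def)
    also have "\<dots> \<le> f 0" using assms(3) .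
    finally show ?thesis using 0 by simp
  next
    case (Suc i')
    have "f (Suc (Suc i')) \<le> bB p q (Suc i')" using assms(4) by (simp add: box_def)
    also have "\<dots> \<le> bA p q i'" by (simp add: bA_def bB_def)
    also have "\<dots> \<le> f (Suc i')" using assms(4) by (simp add: box_def)
    finally show ?thesis using Suc by simp
  qed
  have z: "f (Suc (length p)) = 0"
  proof -
    have "f (Suc (length p)) \<le> bB p q (length p)" using assms(4) by (simp add: box_def)
    also have "\<dots> \<le> pt p (length p)" by (simp add: bB_def)
    finally show ?thesis by (simp add: pt_ge)
  qed
  show "is_partition (lst f)" "pt (lst f) = f" using lst_props[of f, OF dec z] by auto
qed

lemma hs_sum_le:
  assumes "is_partition a" "is_partition b" "hs a b"
  shows "sum_list b \<le> sum_list a"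
proof -
  have "sum_list b = (\<Sum>i<length a. pt b i)" using sum_list_pt hs_length[OF assms] by blast
  also have "\<dots> \<le> (\<Sum>i<length a. pt a i)" using assms(3) by (intro sum_mono) (simp add: hs_def)
  also have "\<dots> = sum_list a" using sum_list_pt[of a "length a"] by simp
  finally show ?thesis .
qed

lemma hs_length_Suc:
  assumes "is_partition la" "is_partition mu" "hs la mu"
  shows "length la \<le> Suc (length mu)"
proof (rule ccontr)
  assume "\<not> ?thesis"
  then have "0 < pt la (Suc (length mu))" using is_partition_pt_pos_iff[OF assms(1)] by simp
  moreover have "pt la (Suc (length mu)) \<le> pt mu (length mu)" using assms(3) by (simp add: hs_def)
  ultimately show False by (simp add: pt_ge)
qed

lemma sum_Suc_split: "(\<Sum>i<Suc L. f i) = f 0 + (\<Sum>i<L. f (Suc i))"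
  by (rule sum.lessThan_Suc_shift)

lemma refl_sum:
  assumes "f \<in> box A B"
  shows "(\<Sum>i<L. A i + B i - f i) + (\<Sum>i<L. f i) = (\<Sum>i<L. A i + B i)"
  unfolding sum.distrib[symmetric]
proof (intro sum.cong refl)
  fix i show "A i + B i - f i + f i = A i + B i" using assms by (simp add: box_def le_add2 trans_le_add2)
qed

lemma refl_box:
  assumes "f \<in> box A B"
  shows "(\<lambda>i. A i + B i - f i) \<in> box A B"
proof -
  have h: "\<And>i. A i \<le> f i \<and> f i \<le> B i" using assms by (simp add: box_def)
  show ?thesis unfolding box_def
  proof (intro CollectI allI)
    fix i show "A i \<le> A i + B i - f i \<and> A i + B i - f i \<le> B i" using h[of i] by arith
  qed
qed

lemma refl_refl:
  assumes "f \<in> box A B"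
  shows "A i + B i - (A i + B i - f i) = f i"
  using assms unfolding box_def by (metis (mono_tags, lifting) mem_Collect_eq diff_diff_cancel le_add2 le_trans trans_le_add2)

lemma lst_pt:
  assumes "is_partition a"
  shows "lst (pt a) = a"
proof -
  have "pt a (Suc i) \<le> pt a i" for i using is_partition_Suc[OF assms] .
  then have l: "is_partition (lst (pt a))" "pt (lst (pt a)) = pt a"
    using lst_props[of "pt a" "length a"] by (auto simp: pt_ge)
  show ?thesis by (rule partition_eqI[OF l(1) assms]) (simp add: l(2))
qed

lemma pieri_fwd:
  assumes mu: "is_partition mu" and j: "j \<le> e" "j \<le> k"
    and rho: "rho \<in> HSm mu (e - j)" and sg: "sg \<in> HSp rho (k - j)"
  shows "Lam mu k rho sg \<in> HSp mu k" "sg \<in> HSm (Lam mu k rho sg) e"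
    "Rho mu (Lam mu k rho sg) sg = rho" "e + sum_list rho - sum_list mu = j"
proof -
  from rho have r: "is_partition rho" "hs mu rho" "sum_list rho + (e - j) = sum_list mu" by (auto simp: HSm_def)
  from sg have s: "is_partition sg" "hs sg rho" "sum_list sg = sum_list rho + (k - j)" by (auto simp: HSp_def)
  define A where "A = bA mu sg"
  define B where "B = bB mu sg"
  define L where "L = LL mu sg"
  define M where "M = max (pt mu 0) (pt sg 0)"
  have Lm: "length mu \<le> L" "length sg \<le> L" by (simp_all add: L_def LL_def)
  have box: "pt rho \<in> box A B" using box_char r(2) s(2) unfolding A_def B_def by blast
  have lr: "length rho \<le> L" using hs_length[OF mu r(1) r(2)] Lm by simp
  have sr: "sum_list rho = (\<Sum>i<L. pt rho i)" using sum_list_pt[OF lr] .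
  have SS: "(\<Sum>i<L. A i + B i) + M = sum_list mu + sum_list sg"
    using sum_max_min[OF mu s(1) Lm] unfolding A_def B_def M_def .
  define g where "g = (\<lambda>i. A i + B i - pt rho i)"
  have gb: "g \<in> box A B" unfolding g_def by (rule refl_box[OF box])
  have gs: "(\<Sum>i<L. g i) + sum_list rho = (\<Sum>i<L. A i + B i)"
    using refl_sum[OF box, of L] sr unfolding g_def by simp
  define F where "F = (\<lambda>i. if i = 0 then sum_list mu + k - (\<Sum>i<L. g i) else g (i - 1))"
  have kj: "k - j + j = k" "e - j + j = e" using j by auto
  have F0: "F 0 = j + M"
  proof -
    have "(\<Sum>i<L. g i) + M + j = sum_list mu + k" using gs SS s(3) kj by linarith
    then show ?thesis unfolding F_def by simp
  qed
  have Lam_eq: "Lam mu k rho sg = lst F"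
    unfolding Lam_def F_def g_def A_def B_def L_def by simp
  have shift: "(\<lambda>i. F (Suc i)) = g" by (simp add: F_def)
  have Fs: "\<And>i. F (Suc i) = g i" by (simp add: F_def)
  have M0: "max (pt mu 0) (pt sg 0) \<le> F 0" using F0 M_def by simp
  have gb': "(\<lambda>i. F (Suc i)) \<in> box (bA mu sg) (bB mu sg)" using gb shift A_def B_def by simp
  have lamP: "is_partition (lst F)" "pt (lst F) = F" using box_shift_part[OF mu s(1) M0 gb'] by auto
  have hsl: "hs (lst F) mu \<and> hs (lst F) sg" using lam_char[of "lst F" mu sg] lamP(2) M0 gb' by simp
  have lenF: "length (lst F) \<le> Suc L" using hs_length_Suc[OF lamP(1) mu] hsl Lm by simp
  have sizeF: "sum_list (lst F) = sum_list mu + k"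
  proof -
    have "sum_list (lst F) = (\<Sum>i<Suc L. F i)" using sum_list_pt[OF lenF] lamP(2) by simp
    also have "\<dots> = F 0 + (\<Sum>i<L. g i)" using sum_Suc_split[of F L] Fs by simp
    also have "\<dots> = sum_list mu + k" using gs SS s(3) kj F0 by linarith
    finally show ?thesis .
  qed
  show "Lam mu k rho sg \<in> HSp mu k" unfolding Lam_eq HSp_def using lamP(1) hsl sizeF by simp
  show "sg \<in> HSm (Lam mu k rho sg) e" unfolding Lam_eq HSm_def using s lamP(1) hsl sizeF r(3) kj
    by simp
  have "Rho mu (lst F) sg = lst (\<lambda>i. A i + B i - g i)"
    unfolding Rho_def lamP(2) A_def B_def using shift by (metis)
  also have "(\<lambda>i. A i + B i - g i) = pt rho" unfolding g_def using refl_refl[OF box] by (simp add: fun_eq_iff)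
  also have "lst (pt rho) = rho" by (rule lst_pt[OF r(1)])
  finally show "Rho mu (Lam mu k rho sg) sg = rho" unfolding Lam_eq .
  show "e + sum_list rho - sum_list mu = j" using r(3) kj by linarith
qed

lemma pieri_bwd:
  assumes mu: "is_partition mu" and la: "la \<in> HSp mu k" and sg: "sg \<in> HSm la e"
  defines "rho \<equiv> Rho mu la sg"
  defines "j \<equiv> e + sum_list rho - sum_list mu"
  shows "j \<le> e" "j \<le> k" "rho \<in> HSm mu (e - j)" "sg \<in> HSp rho (k - j)" "Lam mu k rho sg = la"
proof -
  from la have l: "is_partition la" "hs la mu" "sum_list la = sum_list mu + k" by (auto simp: HSp_def)
  from sg have s: "is_partition sg" "hs la sg" "sum_list sg + e = sum_list la" by (auto simp: HSm_def)
  define A where "A = bA mu sg"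
  define B where "B = bB mu sg"
  define L where "L = LL mu sg"
  define M where "M = max (pt mu 0) (pt sg 0)"
  define h where "h = (\<lambda>i. pt la (Suc i))"
  have Lm: "length mu \<le> L" "length sg \<le> L" by (simp_all add: L_def LL_def)
  have lc: "M \<le> pt la 0" "h \<in> box A B"
    using lam_char[of la mu sg] l(2) s(2) unfolding M_def h_def A_def B_def by auto
  define g where "g = (\<lambda>i. A i + B i - h i)"
  have gb: "g \<in> box A B" unfolding g_def by (rule refl_box[OF lc(2)])
  have rho_eq: "rho = lst g" unfolding rho_def Rho_def g_def A_def B_def h_def ..
  have rhoP: "is_partition rho" "pt rho = g"
    using box_part[OF mu s(1), of g] gb unfolding rho_eq A_def B_def by auto
  have hsr: "hs mu rho \<and> hs sg rho" using box_char[of mu rho sg] rhoP(2) gb A_def B_def by simp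
  have lenl: "length la \<le> Suc L" using hs_length_Suc[OF l(1) mu l(2)] Lm by simp
  have suml: "sum_list la = pt la 0 + (\<Sum>i<L. h i)"
    using sum_list_pt[OF lenl] sum_Suc_split[of "pt la" L] unfolding h_def by simp
  have lenr: "length rho \<le> L" using hs_length[OF mu rhoP(1)] hsr Lm by simp
  have sumr: "sum_list rho = (\<Sum>i<L. g i)" using sum_list_pt[OF lenr] rhoP(2) by simp
  have gs: "(\<Sum>i<L. g i) + (\<Sum>i<L. h i) = (\<Sum>i<L. A i + B i)"
    using refl_sum[OF lc(2), of L] unfolding g_def .
  have SS: "(\<Sum>i<L. A i + B i) + M = sum_list mu + sum_list sg"
    using sum_max_min[OF mu s(1) Lm] unfolding A_def B_def M_def .
  have rm: "sum_list rho \<le> sum_list mu" using hs_sum_le[OF mu rhoP(1)] hsr by simp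
  have rs: "sum_list rho \<le> sum_list sg" using hs_sum_le[OF s(1) rhoP(1)] hsr by simp
  have key: "sum_list rho + M + e = sum_list mu + pt la 0"
    using suml sumr gs SS l(3) s(3) by linarith
  have jv: "j = pt la 0 - M" unfolding j_def using key by linarith
  show "j \<le> e" using jv key rm by linarith
  show "j \<le> k" using jv key rs l(3) s(3) suml sumr gs SS by linarith
  show "rho \<in> HSm mu (e - j)" unfolding HSm_def using rhoP(1) hsr jv key rm lc(1) by auto
  show "sg \<in> HSp rho (k - j)" unfolding HSp_def using s(1) hsr jv key rs lc(1) l(3) s(3) by auto
  define F where "F = (\<lambda>i. if i = 0 then sum_list mu + k - (\<Sum>i<L. A i + B i - pt rho i)
                              else A (i - 1) + B (i - 1) - pt rho (i - 1))"
  have Lam_eq: "Lam mu k rho sg = lst F" unfolding Lam_def F_def A_def B_def L_def ..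
  have hh: "A i + B i - pt rho i = h i" for i using refl_refl[OF lc(2)] rhoP(2) unfolding g_def by simp
  have "F = pt la"
  proof
    fix i show "F i = pt la i"
    proof (cases i)
      case 0
      have "F 0 = sum_list mu + k - (\<Sum>i<L. h i)" unfolding F_def using hh by simp
      then show ?thesis using 0 suml l(3) by simp
    next
      case (Suc i') then show ?thesis unfolding F_def using hh[of i'] by (simp add: h_def)
    qed
  qed
  then show "Lam mu k rho sg = la" unfolding Lam_eq using lst_pt[OF l(1)] by simp
qed

lemma pieri_comb:
  assumes mu: "is_partition mu"
  shows "(\<Sum>j\<in>{j. j \<le> e \<and> j \<le> k}. \<Sum>rho\<in>HSm mu (e - j). \<Sum>sg\<in>HSp rho (k - j). f sg)
       = (\<Sum>la\<in>HSp mu k. \<Sum>sg\<in>HSm la e. f sg)"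
proof -
  define J where "J = {j. j \<le> e \<and> j \<le> k}"
  have fJ: "finite J" unfolding J_def by (rule finite_subset[of _ "{..e}"]) auto
  have "(\<Sum>j\<in>J. \<Sum>rho\<in>HSm mu (e - j). \<Sum>sg\<in>HSp rho (k - j). f sg)
      = (\<Sum>j\<in>J. \<Sum>(rho, sg)\<in>Sigma (HSm mu (e - j)) (\<lambda>rho. HSp rho (k - j)). f sg)"
    by (intro sum.cong refl sum.Sigma) (auto simp: finite_HSm finite_HSp)
  also have "\<dots> = (\<Sum>(j, p)\<in>Sigma J (\<lambda>j. Sigma (HSm mu (e - j)) (\<lambda>rho. HSp rho (k - j))). f (snd p))"
    by (subst sum.Sigma) (auto simp: fJ finite_HSm finite_HSp intro!: finite_SigmaI sum.cong
       simp: case_prod_beta)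
  also have "\<dots> = (\<Sum>(la, sg)\<in>Sigma (HSp mu k) (\<lambda>la. HSm la e). f sg)"
  proof (rule sum.reindex_bij_witness[where j = "\<lambda>(j, rho, sg). (Lam mu k rho sg, sg)"
        and i = "\<lambda>(la, sg). (e + sum_list (Rho mu la sg) - sum_list mu, Rho mu la sg, sg)"])
    fix a assume a: "a \<in> Sigma J (\<lambda>j. Sigma (HSm mu (e - j)) (\<lambda>rho. HSp rho (k - j)))"
    then obtain j rho sg where a': "a = (j, rho, sg)" "j \<le> e" "j \<le> k" "rho \<in> HSm mu (e - j)" "sg \<in> HSp rho (k - j)"
      by (auto simp: J_def)
    note fw = pieri_fwd[OF mu a'(2,3,4,5)]
    show "(\<lambda>(la, sg). (e + sum_list (Rho mu la sg) - sum_list mu, Rho mu la sg, sg)) ((\<lambda>(j, rho, sg). (Lam mu k rho sg, sg)) a) = a"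
      using fw a'(1) by simp
    show "(\<lambda>(j, rho, sg). (Lam mu k rho sg, sg)) a \<in> Sigma (HSp mu k) (\<lambda>la. HSm la e)"
      using fw a'(1) by simp
    show "(case (\<lambda>(j, rho, sg). (Lam mu k rho sg, sg)) a of (la, sg) \<Rightarrow> f sg) = (case a of (j, p) \<Rightarrow> f (snd p))"
      using a'(1) by simp
  next
    fix b assume b: "b \<in> Sigma (HSp mu k) (\<lambda>la. HSm la e)"
    then obtain la sg where b': "b = (la, sg)" "la \<in> HSp mu k" "sg \<in> HSm la e" by auto
    note bw = pieri_bwd[OF mu b'(2,3)]
    show "(\<lambda>(j, rho, sg). (Lam mu k rho sg, sg)) ((\<lambda>(la, sg). (e + sum_list (Rho mu la sg) - sum_list mu, Rho mu la sg, sg)) b) = b"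
      using bw b'(1) by simp
    show "(\<lambda>(la, sg). (e + sum_list (Rho mu la sg) - sum_list mu, Rho mu la sg, sg)) b \<in> Sigma J (\<lambda>j. Sigma (HSm mu (e - j)) (\<lambda>rho. HSp rho (k - j)))"
      using bw b'(1) by (simp add: J_def)
  qed
  also have "\<dots> = (\<Sum>la\<in>HSp mu k. \<Sum>sg\<in>HSm la e. f sg)"
    by (rule sum.Sigma[symmetric]) (auto simp: finite_HSm finite_HSp)
  finally show ?thesis unfolding J_def .
qed


definition deg :: "mono \<Rightarrow> nat" where
  "deg g = sum (Poly_Mapping.lookup g) (Poly_Mapping.keys g)"

definition Gs :: "mono \<Rightarrow> nat \<Rightarrow> mono set" where
  "Gs a k = {g. (\<forall>i. Poly_Mapping.lookup g i \<le> Poly_Mapping.lookup a i) \<and> deg g = k}"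

definition Ds :: "mono \<Rightarrow> mono set" where
  "Ds a = {g. \<forall>i. Poly_Mapping.lookup g i \<le> Poly_Mapping.lookup a i}"

lemma lookup_single_if: "Poly_Mapping.lookup (Poly_Mapping.single k v) k' = (if k = k' then v else 0)"
  by (simp add: lookup_single when_def)

lemma finite_Ds: "finite (Ds a)"
proof -
  let ?K = "Poly_Mapping.keys a"
  let ?B = "{..Max (Poly_Mapping.lookup a ` ?K)}"
  have "Poly_Mapping.lookup ` Ds a \<subseteq> {f. \<forall>x. (x \<in> ?K \<longrightarrow> f x \<in> ?B) \<and> (x \<notin> ?K \<longrightarrow> f x = 0)}"
  proof (intro subsetI CollectI allI conjI impI)
    fix f x assume f: "f \<in> Poly_Mapping.lookup ` Ds a"
    then obtain g where g: "g \<in> Ds a" "f = Poly_Mapping.lookup g" by auto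
    have le: "f x \<le> Poly_Mapping.lookup a x" using g by (simp add: Ds_def)
    show "x \<in> ?K \<Longrightarrow> f x \<in> ?B"
    proof -
      assume "x \<in> ?K"
      then have "Poly_Mapping.lookup a x \<le> Max (Poly_Mapping.lookup a ` ?K)" by (intro Max_ge) auto
      then show ?thesis using le by simp
    qed
    show "x \<notin> ?K \<Longrightarrow> f x = 0" using le by (simp add: in_keys_iff)
  qed
  moreover have "finite {f. \<forall>x. (x \<in> ?K \<longrightarrow> f x \<in> ?B) \<and> (x \<notin> ?K \<longrightarrow> f x = (0::nat))}"
    by (rule finite_set_of_finite_funs) auto
  ultimately have "finite (Poly_Mapping.lookup ` Ds a)" using finite_subset by blast
  moreover have "inj_on Poly_Mapping.lookup (Ds a)" by (auto simp: inj_on_def poly_mapping_eqI)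
  ultimately show ?thesis using finite_imageD by blast
qed

lemma finite_Gs: "finite (Gs a k)"
  by (rule finite_subset[OF _ finite_Ds[of a]]) (auto simp: Gs_def Ds_def)

lemma deg_bound:
  assumes "\<And>i. B \<le> i \<Longrightarrow> Poly_Mapping.lookup g i = 0"
  shows "deg g = (\<Sum>i<B. Poly_Mapping.lookup g i)"
  unfolding deg_def
proof (rule sum.mono_neutral_cong_left)
  show "Poly_Mapping.keys g \<subseteq> {..<B}" using assms by (auto simp: in_keys_iff not_less[symmetric])
qed (auto simp: in_keys_iff)

lemma sset_zero:
  assumes "is_partition la"
  shows "card (sset la 0) = (if la = [] then 1 else 0)"
proof (cases "la = []")
  case True
  have "sset la 0 = {\<lambda>_. 0}"
  proof (rule set_eqI)
    fix T show "T \<in> sset la 0 \<longleftrightarrow> T \<in> {\<lambda>_. 0}"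
      using True by (auto simp: sset_def is_ssyt_def cells_def fun_eq_iff)
  qed
  then show ?thesis using True by simp
next
  case False
  have "(0, 0) \<in> cells la" using is_partition_pt_pos[OF assms, of 0] False by (simp add: cells_pt)
  then have "sset la 0 = {}" using sset_val by fastforce
  then show ?thesis using False by simp
qed

lemma partition_sum0: "is_partition mu \<Longrightarrow> sum_list mu = 0 \<Longrightarrow> mu = []"
proof -
  assume "is_partition mu" "sum_list mu = 0"
  moreover have "length mu \<le> sum_list mu" using partition_length_le \<open>is_partition mu\<close> .
  ultimately have "length mu \<le> 0" by linarith
  then show "mu = []" by simp
qed

lemma pieri_nat:
  "\<forall>a. (\<forall>i. N \<le> i \<longrightarrow> Poly_Mapping.lookup a i = 0) \<longrightarrow> (\<forall>mu k. is_partition mu \<longrightarrow>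
     (\<Sum>g\<in>Gs a k. card (sset mu (a - g))) = (\<Sum>la\<in>HSp mu k. card (sset la a)))"
proof (induction N)
  case 0
  show ?case
  proof (intro allI impI)
    fix a :: mono and mu k assume a0: "\<forall>i. 0 \<le> i \<longrightarrow> Poly_Mapping.lookup a i = 0" and mu: "is_partition mu"
    have a: "a = 0" using a0 by (intro poly_mapping_eqI) simp
    have G: "Gs a k = (if k = 0 then {0} else {})"
    proof -
      have "g \<in> Gs a k \<longleftrightarrow> g = 0 \<and> k = 0" for g
      proof
        assume "g \<in> Gs a k"
        then have "g = 0" "deg g = k" using a by (auto simp: Gs_def intro!: poly_mapping_eqI)
        then show "g = 0 \<and> k = 0" by (simp add: deg_def)
      next
        assume "g = 0 \<and> k = 0" then show "g \<in> Gs a k" by (simp add: Gs_def deg_def)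
      qed
      then show ?thesis by auto
    qed
    have "(\<Sum>g\<in>Gs a k. card (sset mu (a - g))) = (if k = 0 \<and> mu = [] then 1 else 0)"
      using G a sset_zero[OF mu] by auto
    moreover have "(\<Sum>la\<in>HSp mu k. card (sset la a)) = (\<Sum>la\<in>HSp mu k. if la = [] then 1 else 0)"
      using a sset_zero by (intro sum.cong refl) (auto simp: HSp_def)
    moreover have "\<dots> = (if [] \<in> HSp mu k then 1 else 0)" using finite_HSp by (simp add: sum.delta)
    moreover have "[] \<in> HSp mu k \<longleftrightarrow> k = 0 \<and> mu = []"
    proof
      assume "[] \<in> HSp mu k"
      then have "sum_list mu = 0" "k = 0" by (auto simp: HSp_def)
      then show "k = 0 \<and> mu = []" using partition_sum0[OF mu] by simp
    next
      assume "k = 0 \<and> mu = []"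
      then show "[] \<in> HSp mu k" by (simp add: HSp_def is_partition_def hs_def pt_def)
    qed
    ultimately show "(\<Sum>g\<in>Gs a k. card (sset mu (a - g))) = (\<Sum>la\<in>HSp mu k. card (sset la a))"
      by simp
  qed
next
  case (Suc N)
  show ?case
  proof (intro allI impI)
    fix a :: mono and mu k assume aN: "\<forall>i. Suc N \<le> i \<longrightarrow> Poly_Mapping.lookup a i = 0" and mu: "is_partition mu"
    define e where "e = Poly_Mapping.lookup a N"
    define a' where "a' = a - Poly_Mapping.single N e"
    have la': "Poly_Mapping.lookup a' i = (if i = N then 0 else Poly_Mapping.lookup a i)" for i
      by (simp add: a'_def lookup_minus lookup_single_if e_def)
    have a'N: "\<forall>i. N \<le> i \<longrightarrow> Poly_Mapping.lookup a' i = 0" using la' aN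
      by (metis Suc_leI le_neq_implies_less)
    define J where "J = {j. j \<le> e \<and> j \<le> k}"
    have fJ: "finite J" unfolding J_def by (rule finite_subset[of _ "{..e}"]) auto
    define sg where "sg = (\<lambda>(j::nat, g'::mono). g' + Poly_Mapping.single N j)"
    have lsg: "Poly_Mapping.lookup (sg (j, g')) i = Poly_Mapping.lookup g' i + (if i = N then j else 0)" for j g' i
      by (auto simp: sg_def lookup_add lookup_single_if)
    
    have reidx: "(\<Sum>g\<in>Gs a k. card (sset mu (a - g))) =
        (\<Sum>(j, g')\<in>Sigma J (\<lambda>j. Gs a' (k - j)). card (sset mu (a - sg (j, g'))))"
    proof (rule sum.reindex_bij_witness[symmetric, where j = sg
          and i = "\<lambda>g. (Poly_Mapping.lookup g N, g - Poly_Mapping.single N (Poly_Mapping.lookup g N))"])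
      fix p assume p: "p \<in> Sigma J (\<lambda>j. Gs a' (k - j))"
      then obtain j g' where p': "p = (j, g')" "j \<le> e" "j \<le> k" "g' \<in> Gs a' (k - j)" by (auto simp: J_def)
      have g'le: "Poly_Mapping.lookup g' i \<le> Poly_Mapping.lookup a' i" for i using p'(4) by (simp add: Gs_def)
      have g'N: "Poly_Mapping.lookup g' N = 0" using g'le[of N] la' by simp
      show "(Poly_Mapping.lookup (sg p) N, sg p - Poly_Mapping.single N (Poly_Mapping.lookup (sg p) N)) = p"
        using p'(1) g'N by (auto intro!: poly_mapping_eqI simp: lsg lookup_minus lookup_single_if)
      have le: "Poly_Mapping.lookup (sg p) i \<le> Poly_Mapping.lookup a i" for i
        using g'le[of i] p' la'[of i] by (auto simp: lsg e_def)
      have "deg (sg p) = (\<Sum>i<Suc N. Poly_Mapping.lookup (sg p) i)"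
        by (rule deg_bound) (use le aN in \<open>metis le_zero_eq\<close>)
      also have "\<dots> = (\<Sum>i<N. Poly_Mapping.lookup g' i) + j" using p'(1) g'N by (simp add: lsg)
      also have "(\<Sum>i<N. Poly_Mapping.lookup g' i) = deg g'"
        by (rule deg_bound[symmetric]) (use g'le a'N in \<open>metis le_zero_eq\<close>)
      finally have "deg (sg p) = k" using p'(3,4) by (simp add: Gs_def)
      then show "sg p \<in> Gs a k" using le by (simp add: Gs_def)
    next
      fix g assume g: "g \<in> Gs a k"
      have gle: "Poly_Mapping.lookup g i \<le> Poly_Mapping.lookup a i" for i using g by (simp add: Gs_def)
      define j where "j = Poly_Mapping.lookup g N"
      define g' where "g' = g - Poly_Mapping.single N j"
      have lg': "Poly_Mapping.lookup g' i = (if i = N then 0 else Poly_Mapping.lookup g i)" for i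
        by (simp add: g'_def lookup_minus lookup_single_if j_def)
      show "sg (Poly_Mapping.lookup g N, g - Poly_Mapping.single N (Poly_Mapping.lookup g N)) = g"
        by (auto intro!: poly_mapping_eqI simp: sg_def lookup_add lookup_minus lookup_single_if)
      have "deg g = (\<Sum>i<Suc N. Poly_Mapping.lookup g i)"
        by (rule deg_bound) (use gle aN in \<open>metis le_zero_eq\<close>)
      also have "\<dots> = (\<Sum>i<N. Poly_Mapping.lookup g' i) + j" using lg' by (simp add: j_def)
      also have "(\<Sum>i<N. Poly_Mapping.lookup g' i) = deg g'"
        by (rule deg_bound[symmetric]) (use lg' gle a'N la' in \<open>metis le_zero_eq\<close>)
      finally have dg: "deg g' + j = k" using g by (simp add: Gs_def)
      have "j \<le> e" using gle[of N] by (simp add: j_def e_def)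
      moreover have "g' \<in> Gs a' (k - j)" using dg lg' gle la' by (auto simp: Gs_def)
      ultimately show "(Poly_Mapping.lookup g N, g - Poly_Mapping.single N (Poly_Mapping.lookup g N)) \<in> Sigma J (\<lambda>j. Gs a' (k - j))"
        using dg by (auto simp: J_def j_def g'_def)
    qed (auto simp: sg_def)
    
    have br: "card (sset mu (a - sg (j, g'))) = (\<Sum>rho\<in>HSm mu (e - j). card (sset rho (a' - g')))"
      if j: "j \<in> J" and g': "g' \<in> Gs a' (k - j)" for j g'
    proof -
      have g'le: "Poly_Mapping.lookup g' i \<le> Poly_Mapping.lookup a' i" for i using g' by (simp add: Gs_def)
      have g'N: "Poly_Mapping.lookup g' N = 0" using g'le[of N] la' by simp
      have l1: "Poly_Mapping.lookup (a - sg (j, g')) i = Poly_Mapping.lookup a i - Poly_Mapping.lookup g' i - (if i = N then j else 0)" for i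
        by (simp add: lookup_minus lsg)
      have c1: "\<forall>k>N. Poly_Mapping.lookup (a - sg (j, g')) k = 0" using aN l1 by simp
      have c2: "Poly_Mapping.lookup (a' - g') = (\<lambda>i. if i = N then 0 else Poly_Mapping.lookup (a - sg (j, g')) i)"
        using l1 la' by (auto simp: lookup_minus fun_eq_iff)
      have c3: "Poly_Mapping.lookup (a - sg (j, g')) N = e - j" using l1 g'N by (simp add: e_def)
      show ?thesis using branching[OF mu c1 c2] c3 by simp
    qed
    have "(\<Sum>g\<in>Gs a k. card (sset mu (a - g)))
        = (\<Sum>j\<in>J. \<Sum>g'\<in>Gs a' (k - j). card (sset mu (a - sg (j, g'))))"
      unfolding reidx by (rule sum.Sigma[symmetric]) (auto simp: fJ finite_Gs)
    also have "\<dots> = (\<Sum>j\<in>J. \<Sum>g'\<in>Gs a' (k - j). \<Sum>rho\<in>HSm mu (e - j). card (sset rho (a' - g')))"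
      using br by (intro sum.cong refl) auto
    also have "\<dots> = (\<Sum>j\<in>J. \<Sum>rho\<in>HSm mu (e - j). \<Sum>g'\<in>Gs a' (k - j). card (sset rho (a' - g')))"
      by (intro sum.cong refl sum.swap)
    also have "\<dots> = (\<Sum>j\<in>J. \<Sum>rho\<in>HSm mu (e - j). \<Sum>s\<in>HSp rho (k - j). card (sset s a'))"
      using Suc.IH a'N by (intro sum.cong refl) (auto simp: HSm_def)
    also have "\<dots> = (\<Sum>la\<in>HSp mu k. \<Sum>s\<in>HSm la e. card (sset s a'))"
      unfolding J_def by (rule pieri_comb[OF mu])
    also have "\<dots> = (\<Sum>la\<in>HSp mu k. card (sset la a))"
    proof (intro sum.cong refl)
      fix la assume "la \<in> HSp mu k"
      then have lap: "is_partition la" by (simp add: HSp_def)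
      have c1: "\<forall>k>N. Poly_Mapping.lookup a k = 0" using aN by simp
      have c2: "Poly_Mapping.lookup a' = (\<lambda>i. if i = N then 0 else Poly_Mapping.lookup a i)" using la' by auto
      show "(\<Sum>s\<in>HSm la e. card (sset s a')) = card (sset la a)"
        using branching[OF lap c1 c2] by (simp add: e_def)
    qed
    finally show "(\<Sum>g\<in>Gs a k. card (sset mu (a - g))) = (\<Sum>la\<in>HSp mu k. card (sset la a))" .
  qed
qed


lemma sf_mult_hcomp:
  "sf_mult f (hcomp k) a = (\<Sum>g\<in>Gs a k. f (a - g))"
proof -
  have "sf_mult f (hcomp k) a = (\<Sum>g\<in>Ds a. f (a - g) * hcomp k g)"
    unfolding sf_mult_def
  proof (rule sum.reindex_bij_witness[where j = snd and i = "\<lambda>g. (a - g, g)"])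
    fix p :: "mono \<times> mono" assume p: "p \<in> {p. fst p + snd p = a}"
    then have l: "Poly_Mapping.lookup a i = Poly_Mapping.lookup (fst p) i + Poly_Mapping.lookup (snd p) i" for i
      by (auto simp: lookup_add)
    show "(a - snd p, snd p) = p" using l by (auto intro!: poly_mapping_eqI simp: lookup_minus prod_eq_iff)
    show "snd p \<in> Ds a" using l by (simp add: Ds_def)
    have "a - snd p = fst p" using l by (auto intro!: poly_mapping_eqI simp: lookup_minus)
    then show "f (a - snd p) * hcomp k (snd p) = f (fst p) * hcomp k (snd p)" by simp
  next
    fix g assume g: "g \<in> Ds a"
    show "snd (a - g, g) = g" by simp
    have "a - g + g = a" using g by (auto intro!: poly_mapping_eqI simp: lookup_minus lookup_add Ds_def)
    then show "(a - g, g) \<in> {p. fst p + snd p = a}" by simp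
  qed
  also have "\<dots> = (\<Sum>g\<in>Ds a. if deg g = k then f (a - g) else 0)"
    by (intro sum.cong refl) (simp add: hcomp_def deg_def)
  also have "\<dots> = (\<Sum>g\<in>{g \<in> Ds a. deg g = k}. f (a - g))"
    by (rule sum.inter_filter[symmetric, OF finite_Ds])
  also have "{g \<in> Ds a. deg g = k} = Gs a k" by (auto simp: Ds_def Gs_def)
  finally show ?thesis .
qed

lemma pieri:
  assumes "is_partition mu"
  shows "sf_mult (schur mu) (hcomp k) = (\<Sum>la\<in>HSp mu k. schur la)"
proof
  fix a :: mono
  have "finite (Poly_Mapping.keys a)" by simp
  then obtain N where N: "Poly_Mapping.keys a \<subseteq> {..<N}" by (auto simp: finite_nat_set_iff_bounded)
  have aN: "\<forall>i. N \<le> i \<longrightarrow> Poly_Mapping.lookup a i = 0" using N by (auto simp: in_keys_iff not_less[symmetric])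
  have "sf_mult (schur mu) (hcomp k) a = (\<Sum>g\<in>Gs a k. int (card (sset mu (a - g))))"
    unfolding sf_mult_hcomp by (simp add: schur_sset)
  also have "\<dots> = int (\<Sum>g\<in>Gs a k. card (sset mu (a - g)))" by simp
  also have "\<dots> = int (\<Sum>la\<in>HSp mu k. card (sset la a))" using pieri_nat[of N] aN assms by simp
  also have "\<dots> = (\<Sum>la\<in>HSp mu k. schur la a)" by (simp add: schur_sset)
  also have "\<dots> = (\<Sum>la\<in>HSp mu k. schur la) a" by (simp add: sum_fun_apply)
  finally show "sf_mult (schur mu) (hcomp k) a = (\<Sum>la\<in>HSp mu k. schur la) a" .
qed

definition CC :: "nat \<Rightarrow> nat \<Rightarrow> nat \<Rightarrow> nat list \<times> nat list \<Rightarrow> int" where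
  "CC n m d p = (if p \<in> partitions_of n \<times> partitions_of m then int (cnt (fst p) (snd p) d) else 0)"

lemma HSp_eq:
  assumes "mu \<in> partitions_of d" "d \<le> n"
  shows "HSp mu (n - d) = {la \<in> partitions_of n. hs la mu}"
  using assms by (auto simp: HSp_def partitions_of_def)

lemma SF_expand:
  assumes "d \<le> n" "d \<le> m"
  shows "SF n m d = schur_expand (CC n m d)"
proof
  fix x :: "mono \<times> mono"
  obtain a b where x: "x = (a, b)" by (cases x)
  let ?Pn = "partitions_of n" and ?Pm = "partitions_of m" and ?Pd = "partitions_of d"
  have fin: "finite ?Pn" "finite ?Pm" "finite ?Pd" by (simp_all add: finite_partitions_of)
  have "SF n m d x = (\<Sum>mu\<in>?Pd. (\<Sum>la\<in>HSp mu (n - d). schur la a) * (\<Sum>nu\<in>HSp mu (m - d). schur nu b))"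
    unfolding SF_def sum_fun_apply x using pieri
    by (intro sum.cong refl) (auto simp: sf_tensor_def partitions_of_def sum_fun_apply)
  also have "\<dots> = (\<Sum>mu\<in>?Pd. (\<Sum>la\<in>?Pn. if hs la mu then schur la a else 0) * (\<Sum>nu\<in>?Pm. if hs nu mu then schur nu b else 0))"
    using HSp_eq assms fin by (intro sum.cong refl) (simp add: sum.inter_filter)
  also have "\<dots> = (\<Sum>mu\<in>?Pd. \<Sum>la\<in>?Pn. \<Sum>nu\<in>?Pm. (if hs la mu \<and> hs nu mu then 1 else 0) * (schur la a * schur nu b))"
    unfolding sum_product by (intro sum.cong refl) simp
  also have "\<dots> = (\<Sum>la\<in>?Pn. \<Sum>nu\<in>?Pm. \<Sum>mu\<in>?Pd. (if hs la mu \<and> hs nu mu then 1 else 0) * (schur la a * schur nu b))"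
    by (subst sum.swap) (intro sum.cong refl sum.swap)
  also have "\<dots> = (\<Sum>la\<in>?Pn. \<Sum>nu\<in>?Pm. int (cnt la nu d) * (schur la a * schur nu b))"
  proof (intro sum.cong refl)
    fix la nu
    have "(\<Sum>mu\<in>?Pd. (if hs la mu \<and> hs nu mu then 1 else 0) * (schur la a * schur nu b))
        = (\<Sum>mu\<in>?Pd. (if hs la mu \<and> hs nu mu then 1 else 0)) * (schur la a * schur nu b)"
      by (simp add: sum_distrib_right)
    also have "(\<Sum>mu\<in>?Pd. (if hs la mu \<and> hs nu mu then 1 else 0) :: int) = int (cnt la nu d)"
      unfolding cnt_def using sum.inter_filter[OF fin(3), of "\<lambda>_. (1::int)" "\<lambda>mu. hs la mu \<and> hs nu mu"]
      by simp
    finally show "(\<Sum>mu\<in>?Pd. (if hs la mu \<and> hs nu mu then 1 else 0) * (schur la a * schur nu b))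
        = int (cnt la nu d) * (schur la a * schur nu b)" .
  qed
  also have "\<dots> = (\<Sum>p\<in>?Pn \<times> ?Pm. CC n m d p * sf_tensor (schur (fst p)) (schur (snd p)) x)"
    unfolding sum.cartesian_product by (intro sum.cong refl) (auto simp: CC_def sf_tensor_def x)
  also have "\<dots> = schur_expand (CC n m d) x"
    by (rule expand_eval[symmetric]) (auto simp: fin CC_def split: if_splits)
  finally show "SF n m d x = schur_expand (CC n m d) x" .
qed

lemma pt0_le_sum: "pt la 0 \<le> sum_list la"
  by (cases la) (auto simp: pt_def)

lemma CC_supp: "{p. CC n m d p \<noteq> 0} \<subseteq> partitions_of n \<times> partitions_of m"
  by (auto simp: CC_def split: if_splits)

lemma good_sub:
  assumes "{p. c p \<noteq> 0} \<subseteq> partitions_of n \<times> partitions_of m"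
  shows "good c"
proof -
  have "finite (partitions_of n \<times> partitions_of m)" by (simp add: finite_partitions_of)
  then show ?thesis unfolding good_def using assms finite_subset
    by (auto simp: partitions_of_def)
qed

theorem main_result:
  fixes n m r :: nat
  assumes "0 < n" and "0 < m" and "r \<le> min m n"
  shows "SF n m r =
    (\<Sum>d\<le>r. trunc (n + m - d - r) (SF n m d - (if d = 0 then 0 else SF n m (d - 1))))"
proof -
  let ?P = "partitions_of n \<times> partitions_of m"
  define D where "D d = (\<lambda>p. CC n m d p - (if d = 0 then 0 else CC n m (d - 1) p))" for d
  have Dsub: "{p. D d p \<noteq> 0} \<subseteq> ?P" for d
    by (auto simp: D_def CC_def split: if_splits)
  have gD: "good (D d)" for d by (rule good_sub[OF Dsub])
  have finCC: "finite {p. CC n m d p \<noteq> 0}" for d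
    using CC_supp finite_subset finite_partitions_of by (metis finite_SigmaI)
  have eqD: "SF n m d - (if d = 0 then 0 else SF n m (d - 1)) = schur_expand (D d)" if "d \<le> r" for d
  proof (cases "d = 0")
    case True
    have "D d = CC n m 0" using True by (simp add: D_def fun_eq_iff)
    then show ?thesis using True SF_expand[of 0 n m] by simp
  next
    case False
    have dd: "d \<le> n" "d \<le> m" "d - 1 \<le> n" "d - 1 \<le> m" using that assms(3) by auto
    have "schur_expand (D d) = schur_expand (CC n m d) - schur_expand (CC n m (d - 1))"
      unfolding D_def using False expand_diff[OF finCC finCC] by simp
    then show ?thesis using False SF_expand[OF dd(1,2)] SF_expand[OF dd(3,4)] by simp
  qed
  define E where "E d = (\<lambda>p. if first_part (fst p) \<le> n + m - d - r \<and> first_part (snd p) \<le> n + m - d - r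
                              then D d p else 0)" for d
  have tr: "trunc (n + m - d - r) (SF n m d - (if d = 0 then 0 else SF n m (d - 1))) = schur_expand (E d)"
    if "d \<le> r" for d
    unfolding trunc_def eqD[OF that] coeffs_unique[OF gD] E_def ..
  have finE: "finite {p. E d p \<noteq> 0}" for d
  proof -
    have "{p. E d p \<noteq> 0} \<subseteq> ?P" using Dsub[of d] by (auto simp: E_def split: if_splits)
    then show ?thesis using finite_subset finite_partitions_of by (metis finite_SigmaI)
  qed
  have rhs: "(\<Sum>d\<le>r. trunc (n + m - d - r) (SF n m d - (if d = 0 then 0 else SF n m (d - 1))))
      = schur_expand (\<lambda>p. \<Sum>d\<le>r. E d p)"
    using tr expand_sum[of "{..r}" E] finE by simp
  have "CC n m r = (\<lambda>p. \<Sum>d\<le>r. E d p)"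
  proof
    fix p
    show "CC n m r p = (\<Sum>d\<le>r. E d p)"
    proof (cases "p \<in> ?P")
      case False
      have "D d p = 0" for d using False unfolding D_def CC_def by simp
      then have "E d p = 0" for d unfolding E_def by simp
      then show ?thesis using False by (simp add: CC_def)
    next
      case True
      obtain la nu where p: "p = (la, nu)" by (cases p)
      have la: "is_partition la" "sum_list la = n" and nu: "is_partition nu" "sum_list nu = m"
        using True p by (auto simp: partitions_of_def)
      define M where "M = max (pt la 0) (pt nu 0)"
      define S where "S = sum_list la + sum_list nu - max (pt la 0) (pt nu 0)"
      define c where "c d = int (cnt la nu d)" for d
      have SM: "S + M = n + m" using pt0_le_sum[of la] pt0_le_sum[of nu] la nu
        unfolding S_def M_def by linarith
      have sym: "c d = c (S - d)" if "d \<le> S" for d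
        using cnt_sym(1)[OF la(1) nu(1) that[unfolded S_def]] unfolding c_def S_def by simp
      have z: "c d = 0" if "S < d" for d
        using cnt_sym(2)[OF la(1) nu(1) that[unfolded S_def]] unfolding c_def by simp
      have Ed: "E d p = (if M \<le> n + m - d - r then c d - (if d = 0 then 0 else c (d - 1)) else 0)" for d
        using True p by (simp add: E_def D_def CC_def c_def M_def first_part_pt)
      have "c r = (\<Sum>d\<le>r. if M \<le> n + m - d - r then c d - (if d = 0 then 0 else c (d - 1)) else 0)"
        by (rule arith_identity[of r m n S M c, OF assms(3) SM sym z])
      then show ?thesis using Ed True p by (simp add: CC_def c_def)
    qed
  qed
  then show ?thesis using rhs SF_expand[of r n m] assms(3) by simp
qed



theorem mainTheorem4:
  fixes n m r :: nat
  assumes "0 < n" and "0 < m" and "r \<le> min m n"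
  shows "SF n m r =
    (\<Sum>d\<le>r. trunc (n + m - d - r) (SF n m d - (if d = 0 then 0 else SF n m (d - 1))))"
  using main_result[OF assms] .

end
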